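(* Let $p$ be an odd prime, $k\ge2$ and $s>k+2$. Put $S=\sum_{j=0}^{k-1}p^j$, $A_s=2(s-1)p^{k+1}-2(s-k)+3$ and $c_s=\frac{p^{s-2-k}(p-1)}{2}$. For $0\le l<p^k$, the $p^k$-Fibonacci number of $V_{s,l}$ is as follows. (a) If $l=0$: $\mathcal M_{V_{s,l}}=c_sA_s$. (b) If $0\le i\le k-2$, $1\le t\le p-1$ and $(t-1)\sum_{\iota=i}^{k-1}p^\iota+p^i\le l\le (t-1)\sum_{\iota=i+1}^{k-1}p^\iota+p^{i+1}-1$: $\mathcal M_{V_{s,l}}=c_s\big(A_s+2tS-2\sum_{\mu=0}^{k-i-2}p^\mu\big)$ if $1\le t\le\frac{p-1}{2}$, and $\mathcal M_{V_{s,l}}=c_s\big(A_s+(2t-2p)S-2\sum_{\mu=0}^{k-i-2}p^\mu\big)$ if $\frac{p+1}{2}\le t\le p-1$. (c) If $1\le t\le p-1$, $t\ne\frac{p-1}{2}$, and $tp^{k-1}\le l\le tS$: $\mathcal M_{V_{s,l}}=c_s(A_s+2tS)$ if $1\le t\le\frac{p-3}{2}$, and $\mathcal M_{V_{s,l}}=c_s(A_s+(2t-2p)S)$ if $\frac{p+1}{2}\le t\le p-1$. (d) If $1\le i'\le k-1$ and $\frac{p-1}{2}\sum_{\iota=i'}^{k-1}p^\iota\le l\le\frac{p-1}{2}\sum_{\iota=i'-1}^{k-1}p^\iota-1$: $\mathcal M_{V_{s,l}}=c_s\Big(A_s-p^k-2\sum_{\theta=1}^{k-1}p^\theta+2\sum_{\mu=k-i'+1}^{k}p^\mu-1\Big)$.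 (e) If $l=\frac{p-1}{2}S$: $\mathcal M_{V_{s,l}}=c_s\Big(A_s-p^k-2\sum_{\theta=1}^{k-1}p^\theta-1\Big)$.
   Context: Fix an odd prime $p$ and an integer $k\ge 0$. For integers $0\le i<n$ write $\lambda(n,i)=(n-i,1^i)$ for the hook partition of $n$ with $n-i$ boxes in its first row and $i$ further boxes in its first column. If $\mu=\lambda(n',i')$ is obtained from $\lambda(n,i)$ by appending $m=(n'-i')-(n-i)\ge 0$ boxes to the first row and $n''=i'-i\ge 0$ boxes to the first column, we say $\mu$ is obtained by adding the block $B_{m,n''}$ ($m$ horizontal nodes, $n''$ vertical nodes). Put $x_s=p^k(sp-(s+1))$. The relevant part ("column $k$") of the $p$-Bratteli diagram is the graded directed graph with vertices: on floor $2k+1$, $S_i=\lambda(p^k(p-1),i)$ for $0\le i<p^k(p-1)$; on floor $2(k+s)$ ($s\ge1$), $V_{s,l}=\lambda\big(p^k(2sp-(2s+1)),\,x_s+l\big)$ for $0\le l<p^k$; on floor $2(k+s)-1$ ($s\ge2$), $W_{s,l'}=\lambda\big(p^k((2s-1)p-2s),\,x_{s-1}+l'\big)$ for $0\le l'<p^{k+1}$; and edges, each labelled by the block added: (E1) $S_i\to V_{1,l}$ exactly when $i=p^kt+l$ with $0\le t\le p-2$, block $B_{p^kt,\,p^k(p-2-t)}$; (E2) for $s\ge2$, $0\le l<p^k$, $0\le\beta\le p-1$: $V_{s-1,l}\to W_{s,pl+\beta}$, block $B_{p^k(p-1)-((p-1)l+\beta),\,(p-1)l+\beta}$; (E3) for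 $s\ge 2$, $0\le l'<p^{k+1}$ and $t=\lfloor l'/p^k\rfloor$: $W_{s,l'}\to V_{s,l'-p^kt}$, block $B_{p^kt,\,p^k(p-1-t)}$. A path ending at a vertex $v$ is a sequence of edges starting at some $S_i$ and going up one floor at a time to $v$ ($S_i\to V_{1,\cdot}\to W_{2,\cdot}\to V_{2,\cdot}\to W_{3,\cdot}\to\cdots\to v$); $\mathcal P(v)$ is the set of all paths ending at $v$. The blocks of a path are numbered $B^2,B^3,\dots,B^N$: $B^2$ is the block of the edge leaving $S_i$, and for $j\ge2$, $B^{2j-1}$ is the block of the edge into $W_{j,\cdot}$ and $B^{2j}$ the block of the edge into $V_{j,\cdot}$. Write $B^j=B_{m_j,n_j}$. Descents: $1\in\mathrm{Des}(P)$ iff $m_2=p^kt$ with $0\le t<\frac{p-1}{2}$; $2\notin\mathrm{Des}(P)$; for $3\le j<N$, $j\in\mathrm{Des}(P)$ iff $m_j>m_{j+1}$ and $n_j<n_{j+1}$. $\mathrm{des}(P)=|\mathrm{Des}(P)|$. The $p^k$-Fibonacci number of a vertex $v$ is $\mathcal M_v=\sum_{P\in\mathcal P(v)}\mathrm{des}(P)$. *)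

theory Defs
  imports Complex_Main "HOL-Computational_Algebra.Primes"
begin

text \<open>Vertices of column k of the p-Bratteli diagram:
  Sv i = S_i (floor 2k+1), Vv s l = V_{s,l} (floor 2(k+s)), Wv s l' = W_{s,l'} (floor 2(k+s)-1).\<close>
datatype vtx = Sv nat | Vv nat nat | Wv nat nat

text \<open>A block B_{m,n} is the pair (m,n) (m horizontal, n vertical nodes).
  Labelled edges (source, block, target).\<close>
definition edges :: "nat \<Rightarrow> nat \<Rightarrow> (vtx \<times> (nat \<times> nat) \<times> vtx) set" where
  "edges p k =
     {(Sv i, (p^k * t, p^k * (p - 2 - t)), Vv 1 l) | i t l.
        i < p^k * (p - 1) \<and> l < p^k \<and> t \<le> p - 2 \<and> i = p^k * t + l}
   \<union> {(Vv (s - 1) l, (p^k * (p - 1) - ((p - 1) * l + \<beta>), (p - 1) * l + \<beta>), Wv s (p * l + \<beta>)) | s l \<beta>.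
        2 \<le> s \<and> l < p^k \<and> \<beta> \<le> p - 1}
   \<union> {(Wv s l', (p^k * (l' div p^k), p^k * (p - 1 - l' div p^k)), Vv s (l' - p^k * (l' div p^k))) | s l'.
        2 \<le> s \<and> l' < p^(k+1)}"

definition is_path :: "nat \<Rightarrow> nat \<Rightarrow> (vtx \<times> (nat \<times> nat) \<times> vtx) list \<Rightarrow> vtx \<Rightarrow> bool" where
  "is_path p k es v \<longleftrightarrow>
     es \<noteq> [] \<and> set es \<subseteq> edges p k \<and> (\<exists>i. fst (hd es) = Sv i) \<and>
     (\<forall>j. j + 1 < length es \<longrightarrow> snd (snd (es ! j)) = fst (es ! (j + 1))) \<and>
     snd (snd (last es)) = v"

definition paths :: "nat \<Rightarrow> nat \<Rightarrow> vtx \<Rightarrow> (vtx \<times> (nat \<times> nat) \<times> vtx) list set" where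
  "paths p k v = {es. is_path p k es v}"

text \<open>Block B^j of a path (j \<ge> 2): the block of its (j-1)-th edge.  N = length + 1.\<close>
definition blk :: "(vtx \<times> (nat \<times> nat) \<times> vtx) list \<Rightarrow> nat \<Rightarrow> nat \<times> nat" where
  "blk es j = fst (snd (es ! (j - 2)))"

definition Des :: "nat \<Rightarrow> nat \<Rightarrow> (vtx \<times> (nat \<times> nat) \<times> vtx) list \<Rightarrow> nat set" where
  "Des p k es =
     {j. j = 1 \<and> (\<exists>t. fst (blk es 2) = p^k * t \<and> 2 * t < p - 1)}
     \<union> {j. 3 \<le> j \<and> j < length es + 1 \<and>
          fst (blk es j) > fst (blk es (j + 1)) \<and> snd (blk es j) < snd (blk es (j + 1))}"

definition des :: "nat \<Rightarrow> nat \<Rightarrow> (vtx \<times> (nat \<times> nat) \<times> vtx) list \<Rightarrow> nat" where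
  "des p k es = card (Des p k es)"

definition fibM :: "nat \<Rightarrow> nat \<Rightarrow> vtx \<Rightarrow> nat" where
  "fibM p k v = (\<Sum>P\<in>paths p k v. des p k P)"

end

theory Submission
  imports Defs
begin

lemma mem_edges: "e \<in> edges p k \<longleftrightarrow>
  (\<exists>i t l. e = (Sv i, (p^k * t, p^k * (p - 2 - t)), Vv 1 l) \<and>
        i < p^k * (p - 1) \<and> l < p^k \<and> t \<le> p - 2 \<and> i = p^k * t + l) \<or>
  (\<exists>s l \<beta>. e = (Vv (s - 1) l, (p^k * (p - 1) - ((p - 1) * l + \<beta>), (p - 1) * l + \<beta>), Wv s (p * l + \<beta>)) \<and>
        2 \<le> s \<and> l < p^k \<and> \<beta> \<le> p - 1) \<or>
  (\<exists>s l'. e = (Wv s l', (p^k * (l' div p^k), p^k * (p - 1 - l' div p^k)), Vv s (l' - p^k * (l' div p^k))) \<and>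
        2 \<le> s \<and> l' < p^(k+1))"
  unfolding edges_def by blast

lemma edges_Vv1:
  assumes "2 \<le> p"
  shows "(x, b, Vv (Suc 0) l) \<in> edges p k \<longleftrightarrow>
    (\<exists>t. t \<le> p - 2 \<and> l < p^k \<and> x = Sv (p^k*t+l) \<and> b = (p^k*t, p^k*(p-2-t)))"
proof
  assume "(x, b, Vv (Suc 0) l) \<in> edges p k"
  then show "\<exists>t. t \<le> p - 2 \<and> l < p^k \<and> x = Sv (p^k*t+l) \<and> b = (p^k*t, p^k*(p-2-t))"
    unfolding mem_edges by auto
next
  assume "\<exists>t. t \<le> p - 2 \<and> l < p^k \<and> x = Sv (p^k*t+l) \<and> b = (p^k*t, p^k*(p-2-t))"
  then obtain t where t: "t \<le> p - 2" "l < p^k" "x = Sv (p^k*t+l)" "b = (p^k*t, p^k*(p-2-t))" by blast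
  have "p^k*t + l < p^k * (t+1)" using t(2) by simp
  also have "\<dots> \<le> p^k*(p-1)" using t(1) assms by (intro mult_le_mono2) linarith
  finally have "p^k*t + l < p^k*(p-1)" .
  then show "(x, b, Vv (Suc 0) l) \<in> edges p k" unfolding mem_edges
    using t by (intro disjI1) (rule exI[of _ "p^k*t+l"], rule exI[of _ t], rule exI[of _ l], simp)
qed

lemma edges_Vv_fwd:
  assumes "2 \<le> s" "(x, b, Vv s l) \<in> edges p k"
  shows "\<exists>l'. l' < p^(k+1) \<and> x = Wv s l' \<and> b = (p^k * (l' div p^k), p^k * (p - 1 - l' div p^k)) \<and>
     l = l' - p^k * (l' div p^k)"
proof -
  from assms(2) have "(\<exists>s' l'. (x, b, Vv s l) = (Wv s' l', (p^k * (l' div p^k), p^k * (p - 1 - l' div p^k)), Vv s' (l' - p^k * (l' div p^k))) \<and>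
        2 \<le> s' \<and> l' < p^(k+1))"
    using assms(1) unfolding mem_edges by (elim disjE) (simp_all only: prod.inject vtx.distinct vtx.inject, auto)
  then show ?thesis by (simp only: prod.inject vtx.inject, blast)
qed

lemma edges_Vv:
  assumes "2 \<le> s" "0 < p"
  shows "(x, b, Vv s l) \<in> edges p k \<longleftrightarrow>
    (\<exists>t<p. l < p^k \<and> x = Wv s (l+p^k*t) \<and> b = (p^k*t, p^k*(p-1-t)))"
proof
  assume "(x, b, Vv s l) \<in> edges p k"
  then obtain l' where l': "l' < p^(k+1)" "x = Wv s l'" "b = (p^k * (l' div p^k), p^k * (p - 1 - l' div p^k))"
     "l = l' - p^k * (l' div p^k)"
    using edges_Vv_fwd[OF assms(1)] by blast
  define t where "t = l' div p^k"
  have lm: "l = l' mod p^k" using l'(4) by (simp add: minus_mult_div_eq_mod)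
  have e: "l' = l + p^k*t" unfolding lm t_def by simp
  have "t < p" using l'(1) unfolding t_def by (simp add: less_mult_imp_div_less mult.commute)
  moreover have "l < p^k" unfolding lm using assms(2) by simp
  moreover have "x = Wv s (l+p^k*t)" using l'(2) e by simp
  moreover have "b = (p^k*t, p^k*(p-1-t))" using l'(3) unfolding t_def by simp
  ultimately show "\<exists>t<p. l < p^k \<and> x = Wv s (l+p^k*t) \<and> b = (p^k*t, p^k*(p-1-t))"
    by blast
next
  assume "\<exists>t<p. l < p^k \<and> x = Wv s (l+p^k*t) \<and> b = (p^k*t, p^k*(p-1-t))"
  then obtain t where t: "t<p" "l < p^k" "x = Wv s (l+p^k*t)" "b = (p^k*t, p^k*(p-1-t))" by blast
  have d: "(l+p^k*t) div p^k = t" using t(2) assms(2) by simp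
  have "l + p^k*t < p^k*(t+1)" using t(2) by simp
  also have "\<dots> \<le> p^k * p" using t(1) by (intro mult_le_mono2) linarith
  finally have "l+p^k*t < p^(k+1)" by (simp add: mult.commute)
  moreover have "l + p^k*t - p^k * ((l + p^k*t) div p^k) = l" unfolding d by simp
  ultimately have "\<exists>s' l'. (x, b, Vv s l) = (Wv s' l', (p^k * (l' div p^k), p^k * (p - 1 - l' div p^k)), Vv s' (l' - p^k * (l' div p^k))) \<and>
        2 \<le> s' \<and> l' < p^(k+1)" using t d assms(1)
    by (intro exI[of _ s] exI[of _ "l+p^k*t"]) simp
  then show "(x, b, Vv s l) \<in> edges p k" unfolding mem_edges by blast
qed

lemma edges_Wv:
  assumes "0 < p"
  shows "(x, b, Wv s l') \<in> edges p k \<longleftrightarrow>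
    (2 \<le> s \<and> l' < p^(k+1) \<and> x = Vv (s-1) (l' div p) \<and>
      b = (p^k*(p-1) - ((p-1)*(l' div p) + l' mod p), (p-1)*(l' div p) + l' mod p))"
proof
  assume "(x, b, Wv s l') \<in> edges p k"
  then obtain l \<beta> where h: "2 \<le> s" "l < p^k" "\<beta> \<le> p - 1" "l' = p*l+\<beta>" "x = Vv (s-1) l"
    "b = (p^k*(p-1) - ((p-1)*l + \<beta>), (p-1)*l + \<beta>)"
    unfolding mem_edges by auto
  have b: "\<beta> < p" using h(3) assms by linarith
  have "l' div p = l" "l' mod p = \<beta>" using h(4) b by auto
  moreover have "l' < p^(k+1)"
  proof -
    have "l' < p*(l+1)" using h(4) b by simp
    also have "\<dots> \<le> p*p^k" using h(2) by (intro mult_le_mono2) linarith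
    finally show ?thesis by simp
  qed
  ultimately show "2 \<le> s \<and> l' < p^(k+1) \<and> x = Vv (s-1) (l' div p) \<and>
      b = (p^k*(p-1) - ((p-1)*(l' div p) + l' mod p), (p-1)*(l' div p) + l' mod p)" using h by simp
next
  assume h: "2 \<le> s \<and> l' < p^(k+1) \<and> x = Vv (s-1) (l' div p) \<and>
      b = (p^k*(p-1) - ((p-1)*(l' div p) + l' mod p), (p-1)*(l' div p) + l' mod p)"
  have "l' div p < p^k" using h assms by (simp add: div_less_iff_less_mult mult.commute)
  moreover have "l' mod p \<le> p - 1" using assms by (simp add: less_Suc_eq_le[symmetric])
  moreover have "l' = p*(l' div p) + l' mod p" by simp
  ultimately show "(x, b, Wv s l') \<in> edges p k" unfolding mem_edges using h
    apply -
    apply (rule disjI2, rule disjI1)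
    apply (rule exI[of _ s], rule exI[of _ "l' div p"], rule exI[of _ "l' mod p"])
    by simp
qed

lemma edges_Sv: "(x, b, Sv i) \<notin> edges p k"
  unfolding mem_edges by auto

type_synonym edge = "vtx \<times> (nat \<times> nat) \<times> vtx"

definition e0 :: "nat \<Rightarrow> nat \<Rightarrow> nat \<Rightarrow> nat \<Rightarrow> edge" where
  "e0 p k l t = (Sv (p^k*t+l), (p^k*t, p^k*(p-2-t)), Vv 1 l)"
definition e1 :: "nat \<Rightarrow> nat \<Rightarrow> nat \<Rightarrow> nat \<Rightarrow> nat \<Rightarrow> edge" where
  "e1 p k s l t = (Vv (s-1) ((l+p^k*t) div p),
     (p^k*(p-1) - ((p-1)*((l+p^k*t) div p) + (l+p^k*t) mod p), (p-1)*((l+p^k*t) div p) + (l+p^k*t) mod p),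
     Wv s (l+p^k*t))"
definition e2 :: "nat \<Rightarrow> nat \<Rightarrow> nat \<Rightarrow> nat \<Rightarrow> nat \<Rightarrow> edge" where
  "e2 p k s l t = (Wv s (l+p^k*t), (p^k*t, p^k*(p-1-t)), Vv s l)"

lemma is_path_single: "is_path p k [e] v \<longleftrightarrow> e \<in> edges p k \<and> (\<exists>i. fst e = Sv i) \<and> snd (snd e) = v"
  unfolding is_path_def by auto

lemma is_path_snoc:
  assumes "es \<noteq> []"
  shows "is_path p k (es @ [e]) v \<longleftrightarrow> is_path p k es (fst e) \<and> e \<in> edges p k \<and> snd (snd e) = v"
proof -
  have chain: "(\<forall>j. j + 1 < length (es @ [e]) \<longrightarrow> snd (snd ((es @ [e]) ! j)) = fst ((es @ [e]) ! (j + 1)))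
     \<longleftrightarrow> (\<forall>j. j + 1 < length es \<longrightarrow> snd (snd (es ! j)) = fst (es ! (j + 1))) \<and> snd (snd (last es)) = fst e"
  proof safe
    fix j assume H: "\<forall>j. j + 1 < length (es @ [e]) \<longrightarrow> snd (snd ((es @ [e]) ! j)) = fst ((es @ [e]) ! (j + 1))"
      and j: "j + 1 < length es"
    show "snd (snd (es ! j)) = fst (es ! (j + 1))" using H[rule_format, of j] j by (simp add: nth_append)
  next
    assume H: "\<forall>j. j + 1 < length (es @ [e]) \<longrightarrow> snd (snd ((es @ [e]) ! j)) = fst ((es @ [e]) ! (j + 1))"
    have "length es - 1 + 1 < length (es @ [e])" using assms by simp
    with H have "snd (snd ((es @ [e]) ! (length es - 1))) = fst ((es @ [e]) ! (length es - 1 + 1))" by blast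
    then show "snd (snd (last es)) = fst e" using assms by (simp add: nth_append last_conv_nth)
  next
    fix j assume H: "\<forall>j. j + 1 < length es \<longrightarrow> snd (snd (es ! j)) = fst (es ! (j + 1))"
      and L: "snd (snd (last es)) = fst e" and j: "j + 1 < length (es @ [e])"
    show "snd (snd ((es @ [e]) ! j)) = fst ((es @ [e]) ! (j + 1))"
    proof (cases "j + 1 < length es")
      case True then show ?thesis using H by (simp add: nth_append)
    next
      case False
      then have "j = length es - 1" using j by simp
      then show ?thesis using L assms by (simp add: nth_append last_conv_nth)
    qed
  qed
  show ?thesis unfolding is_path_def chain using assms by auto
qed

lemma paths_nonempty: "es \<in> paths p k v \<Longrightarrow> es \<noteq> []"
  unfolding paths_def is_path_def by auto

lemma path_snocE:
  assumes "es \<in> paths p k v"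
  obtains es' e where "es = es' @ [e]" "e \<in> edges p k" "snd (snd e) = v"
    "es' = [] \<and> (\<exists>i. fst e = Sv i) \<or> es' \<noteq> [] \<and> es' \<in> paths p k (fst e)"
proof -
  have ne: "es \<noteq> []" using paths_nonempty[OF assms] .
  then obtain es' e where es: "es = es' @ [e]" by (metis rev_exhaust)
  show ?thesis
  proof (cases "es' = []")
    case True
    then show ?thesis using that[OF es] assms unfolding es paths_def by (simp add: is_path_single)
  next
    case False
    then show ?thesis using that[OF es] assms unfolding es paths_def by (simp add: is_path_snoc)
  qed
qed

lemma paths_not_Sv: "es \<in> paths p k (Sv i) \<Longrightarrow> False"
  by (erule path_snocE) (use edges_Sv in \<open>auto\<close>)

lemma paths1:
  assumes "2 \<le> p" "l < p^k"
  shows "paths p k (Vv 1 l) = (\<lambda>t. [e0 p k l t]) ` {..p-2}"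
proof
  show "paths p k (Vv 1 l) \<subseteq> (\<lambda>t. [e0 p k l t]) ` {..p-2}"
  proof
    fix es assume H: "es \<in> paths p k (Vv 1 l)"
    then obtain es' e where es: "es = es' @ [e]" "e \<in> edges p k" "snd (snd e) = Vv 1 l"
      "es' = [] \<and> (\<exists>i. fst e = Sv i) \<or> es' \<noteq> [] \<and> es' \<in> paths p k (fst e)"
      by (rule path_snocE)
    obtain x b where e: "e = (x, b, Vv 1 l)" using es(3) by (cases e) auto
    obtain t where t: "t \<le> p - 2" "x = Sv (p^k*t+l)" "b = (p^k*t, p^k*(p-2-t))"
      using es(2) unfolding e One_nat_def edges_Vv1[OF assms(1)] by blast
    have "es' = []" using es(4) t(2) e paths_not_Sv by auto
    then show "es \<in> (\<lambda>t. [e0 p k l t]) ` {..p-2}"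
      using t unfolding es e e0_def by auto
  qed
next
  show "(\<lambda>t. [e0 p k l t]) ` {..p-2} \<subseteq> paths p k (Vv 1 l)"
  proof
    fix es assume "es \<in> (\<lambda>t. [e0 p k l t]) ` {..p-2}"
    then obtain t where t: "t \<le> p - 2" "es = [e0 p k l t]" by auto
    have "e0 p k l t \<in> edges p k" unfolding e0_def One_nat_def edges_Vv1[OF assms(1)] using t assms by auto
    then show "es \<in> paths p k (Vv 1 l)" unfolding t(2)
      by (simp add: paths_def is_path_single e0_def)
  qed
qed

lemma e1_edge:
  assumes "2 \<le> s" "0 < p" "l < p^k" "t < p"
  shows "e1 p k s l t \<in> edges p k"
proof -
  have "l + p^k*t < p^k*(t+1)" using assms(3) by simp
  also have "\<dots> \<le> p^k * p" using assms(4) by (intro mult_le_mono2) linarith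
  finally have "l+p^k*t < p^(k+1)" by (simp add: mult.commute)
  then show ?thesis unfolding e1_def using edges_Wv[OF assms(2)] assms(1) by simp
qed

lemma e2_edge:
  assumes "2 \<le> s" "0 < p" "l < p^k" "t < p"
  shows "e2 p k s l t \<in> edges p k"
  unfolding e2_def using edges_Vv[OF assms(1,2)] assms(3,4) by auto

lemma pathsS:
  assumes "2 \<le> s" "0 < p" "l < p^k"
  shows "paths p k (Vv s l) = (\<lambda>(t,es). es @ [e1 p k s l t, e2 p k s l t]) `
           (SIGMA t:{..<p}. paths p k (Vv (s-1) ((l+p^k*t) div p)))"
proof
  show "paths p k (Vv s l) \<subseteq> (\<lambda>(t,es). es @ [e1 p k s l t, e2 p k s l t]) `
           (SIGMA t:{..<p}. paths p k (Vv (s-1) ((l+p^k*t) div p)))"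
  proof
    fix es assume H: "es \<in> paths p k (Vv s l)"
    then obtain es' e where es: "es = es' @ [e]" "e \<in> edges p k" "snd (snd e) = Vv s l"
      "es' = [] \<and> (\<exists>i. fst e = Sv i) \<or> es' \<noteq> [] \<and> es' \<in> paths p k (fst e)"
      by (rule path_snocE)
    obtain x b where e: "e = (x, b, Vv s l)" using es(3) by (cases e) auto
    obtain t where t: "t < p" "x = Wv s (l+p^k*t)" "b = (p^k*t, p^k*(p-1-t))"
      using es(2) unfolding e edges_Vv[OF assms(1,2)] by blast
    have e2: "e = e2 p k s l t" unfolding e e2_def t by simp
    have es'p: "es' \<in> paths p k (Wv s (l+p^k*t))" using es(4) e t by auto
    then obtain es'' e' where es': "es' = es'' @ [e']" "e' \<in> edges p k" "snd (snd e') = Wv s (l+p^k*t)"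
      "es'' = [] \<and> (\<exists>i. fst e' = Sv i) \<or> es'' \<noteq> [] \<and> es'' \<in> paths p k (fst e')"
      by (rule path_snocE)
    obtain x' b' where e': "e' = (x', b', Wv s (l+p^k*t))" using es'(3) by (cases e') auto
    have x': "x' = Vv (s-1) ((l+p^k*t) div p)"
      and b': "b' = (p^k*(p-1) - ((p-1)*((l+p^k*t) div p) + (l+p^k*t) mod p), (p-1)*((l+p^k*t) div p) + (l+p^k*t) mod p)"
      using es'(2) unfolding e' edges_Wv[OF assms(2)] by auto
    have e1: "e' = e1 p k s l t" unfolding e' e1_def x' b' by simp
    have "es'' \<in> paths p k (Vv (s-1) ((l+p^k*t) div p))" using es'(4) e' x' by auto
    then show "es \<in> (\<lambda>(t,es). es @ [e1 p k s l t, e2 p k s l t]) `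
           (SIGMA t:{..<p}. paths p k (Vv (s-1) ((l+p^k*t) div p)))"
      using t(1) unfolding es es' e1 e2 by (intro image_eqI[of _ _ "(t, es'')"]) auto
  qed
next
  show "(\<lambda>(t,es). es @ [e1 p k s l t, e2 p k s l t]) `
           (SIGMA t:{..<p}. paths p k (Vv (s-1) ((l+p^k*t) div p))) \<subseteq> paths p k (Vv s l)"
  proof
    fix es assume "es \<in> (\<lambda>(t,es). es @ [e1 p k s l t, e2 p k s l t]) `
           (SIGMA t:{..<p}. paths p k (Vv (s-1) ((l+p^k*t) div p)))"
    then obtain t es' where t: "t < p" "es' \<in> paths p k (Vv (s-1) ((l+p^k*t) div p))"
      "es = es' @ [e1 p k s l t, e2 p k s l t]" by auto
    have ne: "es' \<noteq> []" using paths_nonempty[OF t(2)] .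
    have "is_path p k es' (Vv (s-1) ((l+p^k*t) div p))" using t(2) unfolding paths_def by simp
    then have "is_path p k (es' @ [e1 p k s l t]) (Wv s (l+p^k*t))"
      using e1_edge[OF assms t(1)] ne by (simp add: is_path_snoc e1_def)
    then have "is_path p k ((es' @ [e1 p k s l t]) @ [e2 p k s l t]) (Vv s l)"
      using e2_edge[OF assms t(1)] by (subst is_path_snoc) (auto simp: e2_def e1_def)
    then show "es \<in> paths p k (Vv s l)" unfolding paths_def t(3) by simp
  qed
qed

definition dsc :: "nat \<times> nat \<Rightarrow> nat \<times> nat \<Rightarrow> bool" where
  "dsc x y \<longleftrightarrow> fst x > fst y \<and> snd x < snd y"

lemma des_single:
  assumes "0 < p"
  shows "des p k [e0 p k l t] = (if 2*t < p-1 then 1 else 0)"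
proof -
  have "Des p k [e0 p k l t] = (if 2*t < p-1 then {1} else {})"
    using assms unfolding Des_def blk_def e0_def by auto
  then show ?thesis unfolding des_def by simp
qed

lemma Des_fin: "es \<noteq> [] \<Longrightarrow> Des p k es \<subseteq> {..<length es + 1}"
  unfolding Des_def by (cases es) auto

lemma des_snoc2:
  assumes "es \<noteq> []"
  shows "des p k (es @ [a, b]) = des p k es
     + (if 2 \<le> length es \<and> dsc (fst (snd (last es))) (fst (snd a)) then 1 else 0)
     + (if dsc (fst (snd a)) (fst (snd b)) then 1 else 0)"
proof -
  define L where "L = length es"
  have L1: "1 \<le> L" using assms L_def by (cases es) auto
  have bl: "blk (es @ [a, b]) j = blk es j" if "2 \<le> j" "j \<le> L + 1" for j
  proof -
    have "j - 2 < L" using that L1 by linarith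
    then show ?thesis unfolding blk_def L_def by (simp add: nth_append)
  qed
  have bla: "blk (es @ [a, b]) (L+2) = fst (snd a)" unfolding blk_def L_def by (simp add: nth_append)
  have blb: "blk (es @ [a, b]) (L+3) = fst (snd b)" unfolding blk_def L_def by (simp add: nth_append)
  have bll: "blk es (L+1) = fst (snd (last es))" unfolding blk_def L_def using assms
    by (simp add: last_conv_nth)
  have bla': "blk (es @ [a, b]) (Suc (Suc L)) = fst (snd a)" using bla by simp
  have blb': "blk (es @ [a, b]) (Suc (Suc (Suc L))) = fst (snd b)" using blb by (simp add: numeral_3_eq_3)
  have bl': "blk (es @ [a, b]) (Suc L) = blk es (Suc L)" using bl[of "L+1"] L1 by simp
  have bll': "blk es (Suc L) = fst (snd (last es))" using bll by simp
  define X where "X = (if 2 \<le> L \<and> dsc (fst (snd (last es))) (fst (snd a)) then {L+1} else {})"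
  define Y where "Y = (if dsc (fst (snd a)) (fst (snd b)) then {L+2} else {})"
  have eq: "Des p k (es @ [a, b]) = Des p k es \<union> X \<union> Y"
  proof (rule set_eqI)
    fix j
    show "j \<in> Des p k (es @ [a, b]) \<longleftrightarrow> j \<in> Des p k es \<union> X \<union> Y"
    proof (cases "j \<le> L")
      case True
      then show ?thesis
        using bl[of 2] bl[of j] bl[of "j+1"] L1 L_def unfolding Des_def X_def Y_def
        by auto
    next
      case False
      then have "j = L + 1 \<or> j = L + 2 \<or> j > L + 2" by linarith
      then show ?thesis
      proof (elim disjE)
        assume j: "j = L + 1"
        show ?thesis using bl' bla' bll' L1 L_def[symmetric] unfolding Des_def X_def Y_def j dsc_def
          by auto
      next
        assume j: "j = L + 2"
        show ?thesis using bla' blb' L1 L_def[symmetric] unfolding Des_def X_def Y_def j dsc_def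
          by auto
      qed (use L_def[symmetric] in \<open>unfold Des_def X_def Y_def, auto\<close>)
    qed
  qed
  have f: "finite (Des p k es)" using Des_fin[OF assms] finite_subset by blast
  have d1: "Des p k es \<inter> X = {}" using Des_fin[OF assms, of p k] unfolding X_def L_def by auto
  have d2: "(Des p k es \<union> X) \<inter> Y = {}" using Des_fin[OF assms, of p k] unfolding X_def Y_def L_def by auto
  have "card (Des p k (es @ [a, b])) = card (Des p k es) + card X + card Y"
    unfolding eq using f d1 d2 by (simp add: card_Un_disjoint X_def Y_def)
  then show ?thesis unfolding des_def X_def Y_def L_def by simp
qed

definition xv :: "nat \<Rightarrow> nat \<Rightarrow> nat" where "xv p y = (p-1)*(y div p) + y mod p"
definition bW :: "nat \<Rightarrow> nat \<Rightarrow> nat \<Rightarrow> nat \<times> nat" where "bW p k y = (p^k*(p-1) - xv p y, xv p y)"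
definition bV :: "nat \<Rightarrow> nat \<Rightarrow> nat \<Rightarrow> nat \<times> nat" where "bV p k t = (p^k*t, p^k*(p-1-t))"

lemma blk_e1: "fst (snd (e1 p k s l t)) = bW p k (l+p^k*t)"
  unfolding e1_def bW_def xv_def by simp
lemma blk_e2: "fst (snd (e2 p k s l t)) = bV p k t"
  unfolding e2_def bV_def by simp

lemma inj_ext:
  assumes "0 < p"
  shows "inj_on (\<lambda>(t,es). es @ [e1 p k s l t, e2 p k s l t]) A"
proof (rule inj_onI, clarify)
  fix t es t' es'
  assume H: "es @ [e1 p k s l t, e2 p k s l t] = es' @ [e1 p k s l t', e2 p k s l t']"
  then have "(es @ [e1 p k s l t]) @ [e2 p k s l t] = (es' @ [e1 p k s l t']) @ [e2 p k s l t']" by simp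
  then have h1: "es @ [e1 p k s l t] = es' @ [e1 p k s l t']" and h2: "e2 p k s l t = e2 p k s l t'"
    unfolding append1_eq_conv by auto
  from h1 have "es = es'" unfolding append1_eq_conv by auto
  moreover from h2 have "t = t'" unfolding e2_def using assms by simp
  ultimately show "t = t' \<and> es = es'" by simp
qed

lemma paths_card:
  assumes "2 \<le> p" "1 \<le> s" "l < p^k"
  shows "finite (paths p k (Vv s l)) \<and> card (paths p k (Vv s l)) = (p-1)*p^(s-1)"
  using assms(2,3)
proof (induction s arbitrary: l rule: dec_induct)
  case base
  have "inj_on (\<lambda>t. [e0 p k l t]) {..p-2}" by (rule inj_onI) (use assms(1) in \<open>simp add: e0_def\<close>)
  then show ?case using paths1[OF assms(1) base] assms(1) by (simp add: card_image)
next
  case (step s)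
  have p0: "0 < p" using assms(1) by simp
  have l0: "(l+p^k*t) div p < p^k" if "t < p" for t
  proof -
    have "l + p^k*t < p^k*(t+1)" using step.prems by simp
    also have "\<dots> \<le> p^k * p" using that by (intro mult_le_mono2) linarith
    finally show ?thesis by (simp add: div_less_iff_less_mult p0)
  qed
  have IH: "finite (paths p k (Vv s ((l+p^k*t) div p))) \<and> card (paths p k (Vv s ((l+p^k*t) div p))) = (p-1)*p^(s-1)"
    if "t < p" for t using step.IH[OF l0[OF that]] .
  have eq: "paths p k (Vv (Suc s) l) = (\<lambda>(t,es). es @ [e1 p k (Suc s) l t, e2 p k (Suc s) l t]) `
           (SIGMA t:{..<p}. paths p k (Vv s ((l+p^k*t) div p)))"
    using pathsS[of "Suc s" p l k] step p0 by simp
  have fin: "finite (SIGMA t:{..<p}. paths p k (Vv s ((l+p^k*t) div p)))"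
    using IH by (intro finite_SigmaI) auto
  have "card (SIGMA t:{..<p}. paths p k (Vv s ((l+p^k*t) div p))) = (\<Sum>t<p. (p-1)*p^(s-1))"
    using IH by (subst card_SigmaI) auto
  also have "\<dots> = (p-1)*p^(Suc s - 1)" using step.hyps
    by (cases s) (auto simp: mult.commute mult.left_commute)
  finally show ?case unfolding eq using fin inj_ext[OF p0] by (simp add: card_image)
qed

lemma fibM_1:
  assumes "2 \<le> p" "l < p^k"
  shows "fibM p k (Vv 1 l) = card {t. t \<le> p-2 \<and> 2*t < p-1}"
proof -
  have "inj_on (\<lambda>t. [e0 p k l t]) {..p-2}" by (rule inj_onI) (use assms(1) in \<open>simp add: e0_def\<close>)
  then have "fibM p k (Vv 1 l) = (\<Sum>t\<le>p-2. des p k [e0 p k l t])"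
    unfolding fibM_def paths1[OF assms] by (simp add: sum.reindex)
  also have "\<dots> = (\<Sum>t\<le>p-2. if 2*t < p-1 then 1 else 0)"
    using assms(1) by (intro sum.cong) (auto simp: des_single)
  also have "\<dots> = card {t. t \<le> p-2 \<and> 2*t < p-1}"
    by (simp add: sum.If_cases Collect_conj_eq atMost_def Int_commute)
  finally show ?thesis .
qed

lemma sum_last_paths:
  assumes "2 \<le> p" "2 \<le> s" "l < p^k"
  shows "(\<Sum>es\<in>paths p k (Vv s l). (if 2 \<le> length es \<and> P (fst (snd (last es))) then 1 else 0 :: nat))
     = (p-1)*p^(s-2) * card {t. t < p \<and> P (bV p k t)}"
proof -
  have p0: "0 < p" using assms(1) by simp
  have l0: "(l+p^k*t) div p < p^k" if "t < p" for t
  proof -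
    have "l + p^k*t < p^k*(t+1)" using assms(3) by simp
    also have "\<dots> \<le> p^k * p" using that by (intro mult_le_mono2) linarith
    finally show ?thesis by (simp add: div_less_iff_less_mult p0)
  qed
  have IH: "finite (paths p k (Vv (s-1) ((l+p^k*t) div p))) \<and> card (paths p k (Vv (s-1) ((l+p^k*t) div p))) = (p-1)*p^(s-2)"
    if "t < p" for t using paths_card[OF assms(1) _ l0[OF that], of "s-1"] assms(2)
    by (simp add: numeral_2_eq_2)
  have "(\<Sum>es\<in>paths p k (Vv s l). (if 2 \<le> length es \<and> P (fst (snd (last es))) then 1 else 0 :: nat))
     = (\<Sum>(t,es)\<in>(SIGMA t:{..<p}. paths p k (Vv (s-1) ((l+p^k*t) div p))).
          (if 2 \<le> length (es @ [e1 p k s l t, e2 p k s l t]) \<and> P (fst (snd (last (es @ [e1 p k s l t, e2 p k s l t])))) then 1 else 0))"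
    unfolding pathsS[OF assms(2) p0 assms(3)] by (subst sum.reindex[OF inj_ext[OF p0]]) (simp add: case_prod_unfold)
  also have "\<dots> = (\<Sum>t<p. \<Sum>es\<in>paths p k (Vv (s-1) ((l+p^k*t) div p)). (if P (bV p k t) then 1 else 0))"
    by (subst sum.Sigma[symmetric]) (use IH in \<open>auto simp: blk_e2\<close>)
  also have "\<dots> = (\<Sum>t<p. (p-1)*p^(s-2) * (if P (bV p k t) then 1 else 0))"
    using IH by (intro sum.cong) auto
  also have "\<dots> = (p-1)*p^(s-2) * card {t. t < p \<and> P (bV p k t)}"
    by (simp add: sum_distrib_left[symmetric] sum.If_cases Collect_conj_eq lessThan_def Int_commute)
  finally show ?thesis .
qed

lemma length_paths_1:
  assumes "2 \<le> p" "l < p^k" "es \<in> paths p k (Vv 1 l)"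
  shows "length es = 1"
  using assms(3) unfolding paths1[OF assms(1,2)] by auto

lemma D_rec:
  assumes "2 \<le> p" "2 \<le> s" "l < p^k"
  shows "fibM p k (Vv s l) = (\<Sum>t<p. fibM p k (Vv (s-1) ((l+p^k*t) div p)))
     + (p-1)*p^(s-2) * card {t. t<p \<and> dsc (bW p k (l+p^k*t)) (bV p k t)}
     + (if 3 \<le> s then (p-1)*p^(s-3) * (\<Sum>t<p. card {t'. t'<p \<and> dsc (bV p k t') (bW p k (l+p^k*t))}) else 0)"
proof -
  have p0: "0 < p" using assms(1) by simp
  have l0: "(l+p^k*t) div p < p^k" if "t < p" for t
  proof -
    have "l + p^k*t < p^k*(t+1)" using assms(3) by simp
    also have "\<dots> \<le> p^k * p" using that by (intro mult_le_mono2) linarith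
    finally show ?thesis by (simp add: div_less_iff_less_mult p0)
  qed
  define A where "A t = paths p k (Vv (s-1) ((l+p^k*t) div p))" for t
  have IH: "finite (A t) \<and> card (A t) = (p-1)*p^(s-2)"
    if "t < p" for t using paths_card[OF assms(1) _ l0[OF that], of "s-1"] assms(2) unfolding A_def
    by (simp add: numeral_2_eq_2)
  have ne: "es \<noteq> []" if "es \<in> A t" for es t using that paths_nonempty unfolding A_def by blast
  define X where "X t (es::edge list) = (if 2 \<le> length es \<and> dsc (fst (snd (last es))) (bW p k (l+p^k*t)) then 1 else 0 :: nat)" for t es
  define Y where "Y t = (if dsc (bW p k (l+p^k*t)) (bV p k t) then 1 else 0 :: nat)" for t
  have "fibM p k (Vv s l) = (\<Sum>(t,es)\<in>(SIGMA t:{..<p}. A t). des p k (es @ [e1 p k s l t, e2 p k s l t]))"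
    unfolding fibM_def pathsS[OF assms(2) p0 assms(3)] A_def
    by (subst sum.reindex[OF inj_ext[OF p0]]) (simp add: case_prod_unfold)
  also have "\<dots> = (\<Sum>t<p. \<Sum>es\<in>A t. des p k es + X t es + Y t)"
    by (subst sum.Sigma[symmetric]) (use IH ne in \<open>auto simp: des_snoc2 blk_e1 blk_e2 X_def Y_def intro!: sum.cong\<close>)
  also have "\<dots> = (\<Sum>t<p. (\<Sum>es\<in>A t. des p k es) + (\<Sum>es\<in>A t. X t es) + (p-1)*p^(s-2) * Y t)"
    using IH by (intro sum.cong) (auto simp: sum.distrib)
  also have "\<dots> = (\<Sum>t<p. fibM p k (Vv (s-1) ((l+p^k*t) div p))) + (\<Sum>t<p. (\<Sum>es\<in>A t. X t es))
       + (p-1)*p^(s-2) * (\<Sum>t<p. Y t)"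
    unfolding fibM_def A_def by (simp add: sum.distrib sum_distrib_left)
  also have "(\<Sum>t<p. Y t) = card {t. t<p \<and> dsc (bW p k (l+p^k*t)) (bV p k t)}"
    unfolding Y_def by (simp add: sum.If_cases Collect_conj_eq lessThan_def Int_commute)
  also have "(\<Sum>t<p. (\<Sum>es\<in>A t. X t es)) =
     (if 3 \<le> s then (p-1)*p^(s-3) * (\<Sum>t<p. card {t'. t'<p \<and> dsc (bV p k t') (bW p k (l+p^k*t))}) else 0)"
  proof (cases "3 \<le> s")
    case True
    have "(\<Sum>es\<in>A t. X t es) = (p-1)*p^(s-3) * card {t'. t'<p \<and> dsc (bV p k t') (bW p k (l+p^k*t))}"
      if "t < p" for t
      unfolding A_def X_def using sum_last_paths[where s="s-1" and P="\<lambda>b. dsc b (bW p k (l+p^k*t))", OF assms(1) _ l0[OF that]] True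
      by (simp add: numeral_3_eq_3 numeral_2_eq_2)
    then show ?thesis using True by (simp add: sum_distrib_left)
  next
    case False
    then have s2: "s = 2" using assms(2) by simp
    have "X t es = 0" if "t < p" "es \<in> A t" for t es
      using length_paths_1[OF assms(1) l0[OF that(1)]] that(2) s2 unfolding A_def X_def by simp
    then show ?thesis using False by simp
  qed
  finally show ?thesis by simp
qed

definition Sg :: "nat \<Rightarrow> nat \<Rightarrow> nat" where "Sg p m = (\<Sum>j<m. p^j)"

lemma Sg_0[simp]: "Sg p 0 = 0" unfolding Sg_def by simp
lemma Sg_Suc: "Sg p (Suc m) = p * Sg p m + 1"
proof (induction m)
  case 0 then show ?case unfolding Sg_def by simp
next
  case (Suc m)
  have "Sg p (Suc (Suc m)) = Sg p (Suc m) + p^(Suc m)" unfolding Sg_def by simp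
  also have "\<dots> = p * (Sg p m + p^m) + 1" using Suc by (simp add: algebra_simps)
  also have "Sg p m + p^m = Sg p (Suc m)" unfolding Sg_def by simp
  finally show ?case .
qed
lemma Sg_Suc': "Sg p (Suc m) = Sg p m + p^m" unfolding Sg_def by simp
lemma Sg_add: "Sg p (a + b) = Sg p a * p^b + Sg p b"
proof (induction b)
  case 0 then show ?case by simp
next
  case (Suc b)
  have "Sg p (a + Suc b) = p * Sg p (a + b) + 1" by (simp add: Sg_Suc)
  also have "\<dots> = Sg p a * p^(Suc b) + (p * Sg p b + 1)" using Suc by (simp add: algebra_simps)
  finally show ?case by (simp add: Sg_Suc)
qed

locale oddp =
  fixes p n :: nat
  assumes p_def: "p = 2*n+1" and n_pos: "1 \<le> n"
begin

lemma p_ge: "3 \<le> p" using p_def n_pos by simp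
lemma p_pos: "0 < p" using p_ge by simp

lemma Sg_pow: "2*n * Sg p m + 1 = p^m"
proof (induction m)
  case 0 then show ?case by simp
next
  case (Suc m)
  have "2*n * Sg p (Suc m) + 1 = p * (2*n*Sg p m + 1)" unfolding Sg_Suc p_def by (simp add: algebra_simps)
  also have "\<dots> = p * p^m" using Suc.IH by simp
  finally show ?case by simp
qed

lemma Sg_less: "n * Sg p m < p^m"
proof -
  have "n * Sg p m \<le> 2*n*Sg p m" by simp
  then show ?thesis using Sg_pow[of m] by linarith
qed

lemma sub_div_mono:
  assumes "a \<le> b"
  shows "a - a div p \<le> b - b div p"
proof -
  have ha: "a div p \<le> a" "b div p \<le> b" by simp_all
  have "b div p \<le> a div p + (b - a)"
  proof (cases "b div p \<le> a div p")
    case True then show ?thesis by simp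
  next
    case False
    define m where "m = b div p - a div p - 1"
    have bm: "b div p = a div p + m + 1" using False m_def by simp
    have h1: "p * (b div p) \<le> b" by simp
    have h2: "a < p * (a div p) + p"
    proof -
      have "a = p * (a div p) + a mod p" by simp
      moreover have "a mod p < p" using p_pos by simp
      ultimately show ?thesis by linarith
    qed
    have "p * (b div p) = p * (a div p) + p * m + p" unfolding bm by (simp add: algebra_simps)
    then have "p * m < b - a" using h1 h2 by linarith
    moreover have "m \<le> p * m" using p_pos by simp
    ultimately show ?thesis using bm by linarith
  qed
  then show ?thesis using ha assms by linarith
qed

lemma xv_eq: "xv p y = y - y div p"
proof -
  have "y = p * (y div p) + y mod p" by simp
  moreover have "(p-1) * (y div p) + y div p = p * (y div p)" using p_pos by (simp add: algebra_simps)
  ultimately have "xv p y + y div p = y" unfolding xv_def by linarith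
  then show ?thesis by linarith
qed

lemma div_eq_helper: "r < d \<Longrightarrow> (d * a + r) div d = (a::nat)"
  by simp

lemma x_at:
  assumes "u < p"
  shows "u * Sg p (Suc k) - (u * Sg p (Suc k)) div p = u * p^k"
proof -
  have e: "u * Sg p (Suc k) = p * (u * Sg p k) + u" unfolding Sg_Suc by (simp add: algebra_simps)
  have "(u * Sg p (Suc k)) div p = u * Sg p k" unfolding e using assms by simp
  moreover have "u * Sg p (Suc k) = u * Sg p k + u * p^k" unfolding Sg_Suc' by (simp add: algebra_simps)
  ultimately show ?thesis by simp
qed

lemma x_at1:
  assumes "u + 1 < p"
  shows "(u * Sg p (Suc k) + 1) - (u * Sg p (Suc k) + 1) div p = u * p^k + 1"
proof -
  have e: "u * Sg p (Suc k) + 1 = p * (u * Sg p k) + (u + 1)" unfolding Sg_Suc by (simp add: algebra_simps)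
  have "(u * Sg p (Suc k) + 1) div p = u * Sg p k" unfolding e by (rule div_eq_helper[OF assms])
  moreover have "u * Sg p (Suc k) = u * Sg p k + u * p^k" unfolding Sg_Suc' by (simp add: algebra_simps)
  ultimately show ?thesis by simp
qed

lemma xthr:
  assumes "u < p" "y < p^(Suc k)"
  shows "p^k * u < y - y div p \<longleftrightarrow> u * Sg p (Suc k) < y"
proof
  assume H: "p^k * u < y - y div p"
  show "u * Sg p (Suc k) < y"
  proof (rule ccontr)
    assume "\<not> u * Sg p (Suc k) < y"
    then have "y - y div p \<le> u * Sg p (Suc k) - (u * Sg p (Suc k)) div p" by (intro sub_div_mono) simp
    then show False using H x_at[OF assms(1), of k] by (simp add: mult.commute)
  qed
next
  assume H: "u * Sg p (Suc k) < y"
  have "u + 1 < p"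
  proof (rule ccontr)
    assume "\<not> u + 1 < p"
    then have "u = 2*n" using assms(1) p_def by simp
    then have "u * Sg p (Suc k) + 1 = p^(Suc k)" using Sg_pow[of "Suc k"] by simp
    then show False using H assms(2) by simp
  qed
  then have "u * p^k + 1 \<le> y - y div p"
    using sub_div_mono[of "u * Sg p (Suc k) + 1" y] H x_at1[of u k] by simp
  then show "p^k * u < y - y div p" by (simp add: mult.commute)
qed

lemma x_le:
  assumes "y < p^(Suc k)"
  shows "y - y div p \<le> p^k * (p-1)"
proof -
  have "y \<le> 2*n * Sg p (Suc k)" using assms Sg_pow[of "Suc k"] by linarith
  then have "y - y div p \<le> 2*n * Sg p (Suc k) - (2*n * Sg p (Suc k)) div p" by (rule sub_div_mono)
  also have "\<dots> = 2*n*p^k" using x_at[of "2*n" k] p_def by simp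
  finally show ?thesis using p_def by (simp add: mult.commute)
qed

lemma C2_count:
  assumes "y < p^(Suc k)"
  shows "card {t'. t' < p \<and> dsc (bV p k t') (bW p k y)} = card {u. u < p \<and> u * Sg p (Suc k) < y}"
proof -
  define x where "x = xv p y"
  have xe: "x = y - y div p" unfolding x_def xv_eq ..
  have xl: "x \<le> p^k*(p-1)" unfolding xe using x_le[OF assms] .
  have iff: "dsc (bV p k t') (bW p k y) \<longleftrightarrow> (p-1-t') * Sg p (Suc k) < y" if "t' < p" for t'
  proof -
    have "dsc (bV p k t') (bW p k y) \<longleftrightarrow> p^k * (p-1-t') < x"
    proof -
      have a: "p^k * (p-1-t') = p^k*(p-1) - p^k*t'" by (simp add: diff_mult_distrib2)
      have b: "p^k*t' \<le> p^k*(p-1)" using that by simp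
      show ?thesis unfolding dsc_def bV_def bW_def x_def[symmetric] a using xl b by auto
    qed
    also have "\<dots> \<longleftrightarrow> (p-1-t') * Sg p (Suc k) < y" unfolding xe by (rule xthr) (use assms p_pos in auto)
    finally show ?thesis .
  qed
  have "{t'. t' < p \<and> dsc (bV p k t') (bW p k y)} = (\<lambda>u. p-1-u) ` {u. u < p \<and> u * Sg p (Suc k) < y}"
  proof (rule set_eqI, rule iffI)
    fix t' assume "t' \<in> {t'. t' < p \<and> dsc (bV p k t') (bW p k y)}"
    then have h: "t' < p" "(p-1-t') * Sg p (Suc k) < y" using iff by auto
    show "t' \<in> (\<lambda>u. p-1-u) ` {u. u < p \<and> u * Sg p (Suc k) < y}"
      by (rule image_eqI[of _ _ "p-1-t'"]) (use h p_pos in auto)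
  next
    fix t' assume "t' \<in> (\<lambda>u. p-1-u) ` {u. u < p \<and> u * Sg p (Suc k) < y}"
    then obtain u where u: "u < p" "u * Sg p (Suc k) < y" "t' = p-1-u" by auto
    have "p - 1 - t' = u" using u by simp
    then show "t' \<in> {t'. t' < p \<and> dsc (bV p k t') (bW p k y)}" using iff[of t'] u p_pos by auto
  qed
  moreover have "inj_on (\<lambda>u. p-1-u) {u. u < p \<and> u * Sg p (Suc k) < y}" by (rule inj_onI) auto
  ultimately show ?thesis by (simp add: card_image)
qed


lemma Sg_pos: "1 \<le> k \<Longrightarrow> 1 \<le> Sg p k"
  by (cases k) (auto simp: Sg_Suc)

lemma C1_iff:
  assumes "1 \<le> k" "l < p^k" "t < p"
  shows "dsc (bW p k (l+p^k*t)) (bV p k t) \<longleftrightarrow> 2*(l+p^k*t)+1 < p^(Suc k)"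
proof -
  define q where "q = p^k"
  define y where "y = l + q*t"
  define \<psi> where "\<psi> z = (z - z div p) + q * (z div q)" for z
  have q0: "0 < q" unfolding q_def using p_pos by simp
  have ydq: "y div q = t" unfolding y_def using assms(2) q0 q_def by simp
  have mono: "\<psi> a \<le> \<psi> b" if "a \<le> b" for a b
    unfolding \<psi>_def using sub_div_mono[OF that] div_le_mono[OF that, of q] by (intro add_mono) simp_all
  have "dsc (bW p k y) (bV p k t) \<longleftrightarrow> \<psi> y < q*(p-1)"
  proof -
    have a: "q * (p-1-t) = q*(p-1) - q*t" by (simp add: diff_mult_distrib2)
    have d: "y div p \<le> y" by simp
    have "dsc (bW p k y) (bV p k t) \<longleftrightarrow> (q*(p-1) - (y - y div p) > q*t \<and> y - y div p < q*(p-1) - q*t)"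
      unfolding dsc_def bV_def bW_def xv_eq q_def[symmetric] a by simp
    also have "\<dots> \<longleftrightarrow> \<psi> y < q*(p-1)" unfolding \<psi>_def ydq using d
      by (intro iffI; (elim conjE)?; (intro conjI)?; linarith)
    finally show ?thesis .
  qed
  define ys where "ys = n * Sg p (Suc k)"
  have ys2: "2*ys + 1 = p^(Suc k)" unfolding ys_def using Sg_pow[of "Suc k"] by simp
  have nS: "n * Sg p k < q" "1 \<le> n * Sg p k" unfolding q_def using Sg_less[of k] Sg_pos[OF assms(1)] n_pos
    by auto
  have yse: "ys = q * n + n * Sg p k" unfolding ys_def Sg_Suc' q_def by (simp add: algebra_simps)
  have ysp: "ys = p * (n * Sg p k) + n" unfolding ys_def Sg_Suc by (simp add: algebra_simps)
  have np: "n < p" "n - 1 < p" using p_def by auto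
  have ys1p: "ys - 1 = p * (n * Sg p k) + (n - 1)" using ysp n_pos by simp
  have ys1q: "ys - 1 = q * n + (n * Sg p k - 1)" using yse nS by simp
  have "ys div q = n" unfolding yse using nS(1) by (rule div_eq_helper)
  moreover have "ys - ys div p = q * n" using x_at[of n k] np unfolding ys_def q_def by (simp add: mult.commute)
  moreover have pm: "p - 1 = 2*n" using p_def by simp
  ultimately have psys: "\<psi> ys = q*(p-1)" unfolding \<psi>_def by simp
  have "(ys - 1) div q = n" unfolding ys1q by (rule div_eq_helper) (use nS in simp)
  moreover have "(ys - 1) div p = n * Sg p k" unfolding ys1p by (rule div_eq_helper) (use np in simp)
  moreover have "1 \<le> q * n" using q0 n_pos by simp
  ultimately have psys1: "\<psi> (ys - 1) = q*(p-1) - 1" unfolding \<psi>_def pm using yse nS by simp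
  have "\<psi> y < q*(p-1) \<longleftrightarrow> 2*y + 1 < p^(Suc k)"
  proof
    assume H: "\<psi> y < q*(p-1)"
    show "2*y + 1 < p^(Suc k)"
    proof (rule ccontr)
      assume "\<not> 2*y + 1 < p^(Suc k)"
      then have "ys \<le> y" using ys2 by linarith
      then show False using mono[of ys y] H psys by simp
    qed
  next
    assume H: "2*y + 1 < p^(Suc k)"
    then have "y \<le> ys - 1" using ys2 by linarith
    then have "\<psi> y \<le> q*(p-1) - 1" using mono[of y "ys - 1"] psys1 by simp
    moreover have "0 < q*(p-1)" using q0 p_ge by simp
    ultimately show "\<psi> y < q*(p-1)" by linarith
  qed
  then show ?thesis using \<open>dsc (bW p k y) (bV p k t) \<longleftrightarrow> \<psi> y < q*(p-1)\<close>
    unfolding y_def q_def by simp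
qed

end

lemma sum_split_add: "(\<Sum>x<(m::nat)+a. G x) = (\<Sum>x<m. G x) + (\<Sum>t<a. G (m+t)) + (0::nat)"
  by (induction a) auto

lemma sum_group: "(\<Sum>t<a. \<Sum>T<(b::nat). G (t + a*T)) = (\<Sum>x<a*b. (G x :: nat))"
proof (induction b)
  case 0 then show ?case by simp
next
  case (Suc b)
  have "(\<Sum>t<a. \<Sum>T<Suc b. G (t + a*T)) = (\<Sum>t<a. (\<Sum>T<b. G (t + a*T)) + G (a*b + t))"
    by (simp add: add.commute)
  also have "\<dots> = (\<Sum>x<a*b. G x) + (\<Sum>t<a. G (a*b + t))" using Suc by (simp add: sum.distrib)
  also have "\<dots> = (\<Sum>x<a*b + a. G x)" by (simp add: sum_split_add)
  finally show ?case by (simp add: add.commute)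
qed

context oddp begin

definition c1 :: "nat \<Rightarrow> nat \<Rightarrow> nat" where "c1 k y = (if 2*y+1 < p^(Suc k) then 1 else 0)"
definition cntm :: "nat \<Rightarrow> nat \<Rightarrow> nat" where "cntm m y = card {u. u < p \<and> u * Sg p m < y}"
definition U :: "nat \<Rightarrow> nat \<Rightarrow> (nat \<Rightarrow> nat) \<Rightarrow> nat \<Rightarrow> nat" where
  "U k j F l = (\<Sum>T<p^(Suc j). F ((l + p^k*T) div p^j))"

lemma lt_q: "l < p^k \<Longrightarrow> t < p \<Longrightarrow> l + p^k*t < p^(Suc k)"
proof -
  assume a: "l < p^k" "t < p"
  have "l + p^k*t < p^k*(t+1)" using a by simp
  also have "\<dots> \<le> p^k * p" using a by (intro mult_le_mono2) linarith
  finally show ?thesis by (simp add: mult.commute)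
qed

lemma lt_q': "l < p^k \<Longrightarrow> t < p \<Longrightarrow> (l + p^k*t) div p < p^k"
  using lt_q p_pos by (simp add: div_less_iff_less_mult mult.commute)

lemma D1: "l < p^k \<Longrightarrow> fibM p k (Vv 1 l) = n"
proof -
  assume l: "l < p^k"
  have "fibM p k (Vv 1 l) = card {t. t \<le> p-2 \<and> 2*t < p-1}" using fibM_1[OF _ l] p_ge by simp
  also have "{t. t \<le> p-2 \<and> 2*t < p-1} = {..<n}" using p_def n_pos by auto
  finally show ?thesis by simp
qed

lemma D_rec':
  assumes "2 \<le> s" "1 \<le> k" "l < p^k"
  shows "fibM p k (Vv s l) = (\<Sum>t<p. fibM p k (Vv (s-1) ((l+p^k*t) div p)))
     + (p-1)*p^(s-2) * U k 0 (c1 k) l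
     + (if 3 \<le> s then (p-1)*p^(s-3) * U k 0 (cntm (Suc k)) l else 0)"
proof -
  have a: "card {t. t<p \<and> dsc (bW p k (l+p^k*t)) (bV p k t)} = U k 0 (c1 k) l"
  proof -
    have "{t. t<p \<and> dsc (bW p k (l+p^k*t)) (bV p k t)} = {t. t<p \<and> 2*(l+p^k*t)+1 < p^(Suc k)}"
      using C1_iff[OF assms(2,3)] by auto
    then show ?thesis unfolding U_def c1_def by (simp add: sum.If_cases Collect_conj_eq lessThan_def Int_commute)
  qed
  have b: "(\<Sum>t<p. card {t'. t'<p \<and> dsc (bV p k t') (bW p k (l+p^k*t))}) = U k 0 (cntm (Suc k)) l"
    unfolding U_def cntm_def using C2_count[OF lt_q[OF assms(3)]] by simp
  show ?thesis using D_rec[OF _ assms(1,3)] p_ge a b by simp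
qed

lemma U_shift:
  assumes "l < p^k"
  shows "(\<Sum>t<p. U k j F ((l+p^k*t) div p)) = U k (Suc j) F l"
proof -
  have e: "((l+p^k*t) div p + p^k*T) div p^j = (l + p^k*t + p*(p^k*T)) div p^(Suc j)" for t T
  proof -
    have "(l+p^k*t) div p + p^k*T = (l + p^k*t + p*(p^k*T)) div p" using p_pos by simp
    then show ?thesis by (simp add: div_mult2_eq)
  qed
  have "(\<Sum>t<p. U k j F ((l+p^k*t) div p)) = (\<Sum>t<p. \<Sum>T<p^(Suc j). (\<lambda>x. F ((l + p^k*x) div p^(Suc j))) (t + p*T))"
    unfolding U_def e by (simp add: algebra_simps)
  also have "\<dots> = (\<Sum>x<p*p^(Suc j). F ((l + p^k*x) div p^(Suc j)))" by (rule sum_group)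
  finally show ?thesis unfolding U_def by simp
qed

lemma swap_U:
  assumes "l < p^k"
  shows "(\<Sum>t<p. \<Sum>j<M. c j * U k j F ((l+p^k*t) div p)) = (\<Sum>j<M. c j * U k (Suc j) F l)"
  by (subst sum.swap) (simp add: sum_distrib_left[symmetric] U_shift[OF assms])

lemma D_closed:
  assumes "1 \<le> k" "l < p^k"
  shows "fibM p k (Vv (Suc m) l) = n * p^m + (\<Sum>j<m. (p-1)*p^(m-1-j) * U k j (c1 k) l)
      + (\<Sum>j<m-1. (p-1)*p^(m-2-j) * U k j (cntm (Suc k)) l)"
  using assms(2)
proof (induction m arbitrary: l)
  case 0 then show ?case using D1 by simp
next
  case (Suc m)
  let ?l = "\<lambda>t. (l+p^k*t) div p"
  have IH: "fibM p k (Vv (Suc m) (?l t)) = n * p^m + (\<Sum>j<m. (p-1)*p^(m-1-j) * U k j (c1 k) (?l t))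
      + (\<Sum>j<m-1. (p-1)*p^(m-2-j) * U k j (cntm (Suc k)) (?l t))" if "t < p" for t
    using Suc.IH[OF lt_q'[OF Suc.prems that]] .
  have "(\<Sum>t<p. fibM p k (Vv (Suc m) (?l t))) = (\<Sum>t<p. n * p^m + (\<Sum>j<m. (p-1)*p^(m-1-j) * U k j (c1 k) (?l t))
      + (\<Sum>j<m-1. (p-1)*p^(m-2-j) * U k j (cntm (Suc k)) (?l t)))"
    using IH by (intro sum.cong) auto
  also have "\<dots> = n * p^(Suc m) + (\<Sum>j<m. (p-1)*p^(m-1-j) * U k (Suc j) (c1 k) l)
      + (\<Sum>j<m-1. (p-1)*p^(m-2-j) * U k (Suc j) (cntm (Suc k)) l)"
    by (simp add: sum.distrib swap_U[OF Suc.prems] sum_distrib_left[symmetric])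
  finally have A: "(\<Sum>t<p. fibM p k (Vv (Suc m) (?l t))) = n * p^(Suc m) + (\<Sum>j<m. (p-1)*p^(m-1-j) * U k (Suc j) (c1 k) l)
      + (\<Sum>j<m-1. (p-1)*p^(m-2-j) * U k (Suc j) (cntm (Suc k)) l)" .
  have B: "(\<Sum>j<Suc m. (p-1)*p^(Suc m-1-j) * U k j (c1 k) l) = (p-1)*p^m * U k 0 (c1 k) l + (\<Sum>j<m. (p-1)*p^(m-1-j) * U k (Suc j) (c1 k) l)"
    by (subst sum.lessThan_Suc_shift) simp
  have C: "(\<Sum>j<Suc m-1. (p-1)*p^(Suc m-2-j) * U k j (cntm (Suc k)) l) =
     (if 1 \<le> m then (p-1)*p^(m-1) * U k 0 (cntm (Suc k)) l else 0) + (\<Sum>j<m-1. (p-1)*p^(m-2-j) * U k (Suc j) (cntm (Suc k)) l)"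
  proof (cases m)
    case 0 then show ?thesis by simp
  next
    case (Suc m')
    have e: "Suc m - 1 = Suc m'" "m - 1 = m'" using Suc by simp_all
    show ?thesis by (simp only: e) (subst sum.lessThan_Suc_shift, simp add: Suc)
  qed
  have R: "fibM p k (Vv (Suc (Suc m)) l) = (\<Sum>t<p. fibM p k (Vv (Suc m) (?l t)))
     + (p-1)*p^m * U k 0 (c1 k) l
     + (if 1 \<le> m then (p-1)*p^(m-1) * U k 0 (cntm (Suc k)) l else 0)"
    using D_rec'[of "Suc (Suc m)", OF _ assms(1) Suc.prems] by (simp add: numeral_3_eq_3 Suc_le_eq)
  show ?case unfolding R A B C by simp
qed

end

lemma sum_rev_nat: "2 * (\<Sum>a<Suc N. N - a) = N * (N + 1)"
proof (induction N)
  case 0 then show ?case by simp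
next
  case (Suc N)
  have "(\<Sum>a<Suc (Suc N). Suc N - a) = (\<Sum>a<Suc N. Suc N - a)" by simp
  also have "\<dots> = (\<Sum>a<Suc N. (N - a) + 1)" by (intro sum.cong) auto
  also have "\<dots> = (\<Sum>a<Suc N. N - a) + (\<Sum>a<Suc N. 1)" by (simp only: sum.distrib)
  also have "\<dots> = (\<Sum>a<Suc N. N - a) + Suc N" by simp
  finally show ?case using Suc by simp
qed

lemma card_sum: "card {u. u < (N::nat) \<and> P u} = (\<Sum>u<N. if P u then 1 else 0)"
  by (simp add: sum.If_cases Collect_conj_eq lessThan_def Int_commute)

context oddp begin

lemma U_small:
  assumes "j < k" "l < p^k"
  shows "U k j F l = (\<Sum>T<p^(Suc j). F (l div p^j + p^(k-j)*T))"
proof -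
  have e: "p^k = p^j * p^(k-j)" using assms(1) by (simp add: power_add[symmetric])
  have "(l + p^k*T) div p^j = l div p^j + p^(k-j)*T" for T
    unfolding e using p_pos by (simp add: mult.assoc)
  then show ?thesis unfolding U_def by simp
qed

lemma U_big:
  assumes "k \<le> j" "l < p^k"
  shows "U k j F l = p^(j-k) * (\<Sum>y<p^(Suc k). F y)"
proof -
  have q0: "0 < p^k" using p_pos by simp
  have e1: "p^j = p^k * p^(j-k)" using assms(1) by (simp add: power_add[symmetric])
  have e2: "(l + p^k*T) div p^j = T div p^(j-k)" for T
  proof -
    have "(l + p^k*T) div p^k = T" using assms(2) q0 by simp
    then show ?thesis unfolding e1 by (simp add: div_mult2_eq)
  qed
  have e3: "p^(Suc j) = p^(j-k) * p^(Suc k)" using assms(1) by (simp add: power_add[symmetric])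
  have "U k j F l = (\<Sum>x<p^(j-k) * p^(Suc k). F (x div p^(j-k)))" unfolding U_def e2 e3 ..
  also have "\<dots> = (\<Sum>t<p^(j-k). \<Sum>T<p^(Suc k). F ((t + p^(j-k)*T) div p^(j-k)))"
    by (rule sum_group[symmetric])
  also have "\<dots> = (\<Sum>t<p^(j-k). \<Sum>T<p^(Suc k). F T)"
    using p_pos by (intro sum.cong refl) simp
  finally show ?thesis by simp
qed

lemma V1:
  assumes "m + e = Suc k" "r < p^m"
  shows "(\<Sum>T<p^e. c1 k (r + p^m*T)) = n * Sg p e + (if 2*r+1 < p^m then 1 else 0)"
proof -
  define N where "N = n * Sg p e"
  define P where "P = p^m"
  have Q: "p^e = 2*N + 1" unfolding N_def using Sg_pow[of e] by simp
  have PQ: "p^(Suc k) = P * (2*N+1)" unfolding P_def Q[symmetric] assms(1)[symmetric] by (simp add: power_add)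
  have f: "c1 k (r + P*T) = (if T < N then 1 else if T = N then (if 2*r+1 < P then 1 else 0) else 0)" for T
  proof -
    have PQ': "P * (2*N+1) = 2*(P*N) + P" by (simp add: algebra_simps)
    consider "T < N" | "T = N" | "N < T" by linarith
    then show ?thesis
    proof cases
      case 1
      then have "P*(T+1) \<le> P*N" by (intro mult_le_mono2) simp
      then have "2*(r + P*T)+1 < P * (2*N+1)" using assms(2) PQ' unfolding P_def[symmetric]
        by (simp add: algebra_simps)
      then show ?thesis using 1 unfolding c1_def PQ by simp
    next
      case 2
      then show ?thesis unfolding c1_def PQ PQ' by (simp add: algebra_simps)
    next
      case 3
      then have "P*(N+1) \<le> P*T" by (intro mult_le_mono2) simp
      then have "\<not> 2*(r + P*T)+1 < P * (2*N+1)" unfolding PQ' by (simp add: algebra_simps)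
      then show ?thesis using 3 unfolding c1_def PQ by simp
    qed
  qed
  have Qe: "p^e = N + (1 + N)" using Q by simp
  have "(\<Sum>T<p^e. c1 k (r + p^m*T)) = (\<Sum>T<N + (1 + N). c1 k (r + P*T))" by (simp only: Qe P_def)
  also have "\<dots> = (\<Sum>T<N. c1 k (r + P*T)) + (\<Sum>t<1+N. c1 k (r + P*(N+t)))" by (simp add: sum_split_add)
  also have "(\<Sum>T<N. c1 k (r + P*T)) = N" using f by simp
  also have "(\<Sum>t<1+N. c1 k (r + P*(N+t))) = (if 2*r+1 < P then 1 else 0)"
    by (simp only: add.commute[of 1] Suc_eq_plus1[symmetric] sum.lessThan_Suc_shift f) simp
  finally show ?thesis unfolding N_def P_def .
qed

lemma V2:
  assumes "m + e = Suc k" "r < p^m"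
  shows "(\<Sum>T<p^e. cntm (Suc k) (r + p^m*T)) = p * n * Sg p e + cntm m r"
proof -
  define P where "P = p^m"
  have inner: "(\<Sum>T<p^e. if a * Sg p (Suc k) < r + P*T then 1 else 0) = (2*n - a) * Sg p e + (if a * Sg p m < r then 1 else 0)"
    if a: "a < p" for a
  proof -
    define A where "A = a * Sg p e"
    define B where "B = a * Sg p m"
    have aS: "a * Sg p (Suc k) = P * A + B" unfolding A_def B_def P_def assms(1)[symmetric] add.commute[of m e] Sg_add
      by (simp add: algebra_simps)
    have a2: "a \<le> 2*n" using a p_def by simp
    have "B \<le> 2*n*Sg p m" unfolding B_def using a2 by simp
    then have BP: "B < P" unfolding P_def using Sg_pow[of m] by linarith
    have "A \<le> 2*n*Sg p e" unfolding A_def using a2 by simp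
    then have Ae: "p^e = A + 1 + (2*n - a) * Sg p e" unfolding A_def using Sg_pow[of e] a2
      by (simp add: diff_mult_distrib)
    have f: "(if a * Sg p (Suc k) < r + P*T then 1 else 0) = (if T < A then 0 else if T = A then (if B < r then 1 else 0) else (1::nat))" for T
    proof -
      consider "T < A" | "T = A" | "A < T" by linarith
      then show ?thesis
      proof cases
        case 1
        then have "P*(T+1) \<le> P*A" by (intro mult_le_mono2) simp
        then have "\<not> a * Sg p (Suc k) < r + P*T" unfolding aS using assms(2) unfolding P_def[symmetric]
          by (simp add: algebra_simps)
        then show ?thesis using 1 by simp
      next
        case 2 then show ?thesis unfolding aS by simp
      next
        case 3
        then have "P*(A+1) \<le> P*T" by (intro mult_le_mono2) simp
        then have "a * Sg p (Suc k) < r + P*T" unfolding aS using BP by (simp add: algebra_simps)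
        then show ?thesis using 3 by simp
      qed
    qed
    have "(\<Sum>T<p^e. if a * Sg p (Suc k) < r + P*T then 1 else 0) = (\<Sum>T<A + (1 + (2*n - a) * Sg p e). if a * Sg p (Suc k) < r + P*T then 1 else (0::nat))"
      unfolding Ae by simp
    also have "\<dots> = (\<Sum>T<A. if a * Sg p (Suc k) < r + P*T then 1 else 0) + (\<Sum>t<1 + (2*n - a) * Sg p e. if a * Sg p (Suc k) < r + P*(A+t) then 1 else 0)"
      by (simp add: sum_split_add)
    also have "(\<Sum>T<A. if a * Sg p (Suc k) < r + P*T then 1 else (0::nat)) = 0" using f by simp
    also have "(\<Sum>t<1 + (2*n - a) * Sg p e. if a * Sg p (Suc k) < r + P*(A+t) then 1 else (0::nat))
        = (if B < r then 1 else 0) + (2*n - a) * Sg p e"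
      by (simp only: add.commute[of 1] Suc_eq_plus1[symmetric] sum.lessThan_Suc_shift f) simp
    finally show ?thesis unfolding B_def by simp
  qed
  have "(\<Sum>T<p^e. cntm (Suc k) (r + p^m*T)) = (\<Sum>T<p^e. \<Sum>a<p. if a * Sg p (Suc k) < r + P*T then 1 else 0)"
    unfolding cntm_def card_sum P_def ..
  also have "\<dots> = (\<Sum>a<p. \<Sum>T<p^e. if a * Sg p (Suc k) < r + P*T then 1 else 0)" by (rule sum.swap)
  also have "\<dots> = (\<Sum>a<p. (2*n - a) * Sg p e + (if a * Sg p m < r then 1 else 0))"
    using inner by (intro sum.cong) auto
  also have "\<dots> = (\<Sum>a<p. 2*n - a) * Sg p e + cntm m r"
    unfolding cntm_def card_sum by (simp add: sum.distrib sum_distrib_right)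
  also have "(\<Sum>a<p. 2*n - a) = p * n" using sum_rev_nat[of "2*n"] p_def by simp
  finally show ?thesis by (simp add: algebra_simps)
qed

definition ind :: "nat \<Rightarrow> nat \<Rightarrow> nat \<Rightarrow> nat" where
  "ind k j l = (if 2*(l div p^j)+1 < p^(k-j) then 1 else 0)"

lemma rj_less: "j \<le> k \<Longrightarrow> l < p^k \<Longrightarrow> l div p^j < p^(k-j)"
proof -
  assume a: "j \<le> k" "l < p^k"
  have "p^k = p^(k-j) * p^j" using a(1) by (simp add: power_add[symmetric])
  then show ?thesis using a(2) p_pos by (simp add: div_less_iff_less_mult)
qed

lemma U_c1_small: "j < k \<Longrightarrow> l < p^k \<Longrightarrow> U k j (c1 k) l = n * Sg p (Suc j) + ind k j l"
  using U_small V1[of "k-j" "Suc j" k "l div p^j"] rj_less[of j k l] unfolding ind_def by simp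

lemma U_cnt_small: "j < k \<Longrightarrow> l < p^k \<Longrightarrow> U k j (cntm (Suc k)) l = p * n * Sg p (Suc j) + cntm (k-j) (l div p^j)"
  using U_small V2[of "k-j" "Suc j" k "l div p^j"] rj_less[of j k l] by simp

lemma U_c1_big: "k \<le> j \<Longrightarrow> l < p^k \<Longrightarrow> U k j (c1 k) l = p^(j-k) * (n * Sg p (Suc k))"
  using U_big V1[of 0 "Suc k" k 0] by simp

lemma U_cnt_big: "k \<le> j \<Longrightarrow> l < p^k \<Longrightarrow> U k j (cntm (Suc k)) l = p^(j-k) * (p * n * Sg p (Suc k))"
  using U_big V2[of 0 "Suc k" k 0] by (simp add: cntm_def)

end

context oddp begin

definition X :: "nat \<Rightarrow> nat" where "X k = (\<Sum>j<k. p^(k-j) * (2*n*Sg p (Suc j)))"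
definition W :: "nat \<Rightarrow> nat \<Rightarrow> nat" where
  "W k l = (\<Sum>j<k. p^(k-1-j) * (p * ind k j l + cntm (k-j) (l div p^j)))"

lemma D_final:
  assumes "1 \<le> k" "l < p^k"
  shows "fibM p k (Vv (e + k + 2) l) = n * p^e * (p^(k+1) + 2 * X k + 2 * W k l + (2*e+1) * (2*n*Sg p (Suc k)))"
proof -
  define M where "M = e + k + 1"
  have pm: "p - 1 = 2*n" using p_def by simp
  define f where "f j = (p-1)*p^(M-1-j) * U k j (c1 k) l" for j
  define g where "g j = (p-1)*p^(M-2-j) * U k j (cntm (Suc k)) l" for j
  have D: "fibM p k (Vv (e + k + 2) l) = n * p^M + (\<Sum>j<M. f j) + (\<Sum>j<M-1. g j)"
    using D_closed[OF assms, of M] unfolding M_def f_def g_def by (simp add: numeral_2_eq_2)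
  have M1: "M = k + (e+1)" "M - 1 = k + e" unfolding M_def by simp_all
  have fs: "(\<Sum>j<M. f j) = (\<Sum>j<k. f j) + (\<Sum>i<e+1. f (k+i))"
    unfolding M1(1) by (simp only: sum_split_add add_0_right)
  have gs: "(\<Sum>j<M-1. g j) = (\<Sum>j<k. g j) + (\<Sum>i<e. g (k+i))"
    unfolding M1(2) by (simp only: sum_split_add add_0_right)
  have fb: "f (k+i) = 2*n*p^e*(n*Sg p (Suc k))" if "i < e+1" for i
  proof -
    have "p^(M-1-(k+i)) * p^(k+i-k) = p^e" unfolding M_def using that by (simp add: power_add[symmetric])
    then show ?thesis unfolding f_def U_c1_big[OF _ assms(2)] pm
      by (simp add: U_c1_big[OF _ assms(2)] mult.assoc mult.left_commute[of "p^(M-1-(k+i))"])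
  qed
  have gb: "g (k+i) = 2*n*p^e*(n*Sg p (Suc k))" if "i < e" for i
  proof -
    have ee: "M-2-(k+i) = e - Suc i" "k+i-k = i" unfolding M_def by simp_all
    have "p^(e - Suc i) * (p^i * p) = p^(e - Suc i + Suc i)" by (simp add: power_add)
    also have "e - Suc i + Suc i = e" using that by simp
    finally have "p^(M-2-(k+i)) * (p^(k+i-k) * p) = p^e" unfolding ee .
    then show ?thesis unfolding g_def pm
      by (simp add: U_cnt_big[OF _ assms(2)] mult.assoc mult.left_commute[of "p^(M-2-(k+i))"])
  qed
  have fgs: "f j + g j = n * p^e * (2 * (p^(k-j) * (2*n*Sg p (Suc j))) + 2 * (p^(k-1-j) * (p * ind k j l + cntm (k-j) (l div p^j))))"
    if "j < k" for j
  proof -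
    have e1: "p^(M-1-j) = p^e * p^(k-j)" unfolding M_def using that by (simp add: power_add[symmetric])
    have e2: "p^(M-2-j) = p^e * p^(k-1-j)" unfolding M_def using that by (simp add: power_add[symmetric])
    have e3: "p^(k-j) = p * p^(k-1-j)" using that by (simp add: power_Suc[symmetric] Suc_diff_Suc)
    show ?thesis unfolding f_def g_def U_c1_small[OF that assms(2)] U_cnt_small[OF that assms(2)] e1 e2 pm e3
      by (simp add: algebra_simps)
  qed
  have "(\<Sum>j<k. f j) + (\<Sum>j<k. g j) = (\<Sum>j<k. n * p^e * (2 * (p^(k-j) * (2*n*Sg p (Suc j))) + 2 * (p^(k-1-j) * (p * ind k j l + cntm (k-j) (l div p^j)))))"
    unfolding sum.distrib[symmetric] using fgs by (intro sum.cong) auto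
  also have "\<dots> = n * p^e * (2 * X k + 2 * W k l)"
    unfolding X_def W_def by (simp only: sum_distrib_left[symmetric] sum.distrib)
  moreover have "(\<Sum>i<e+1. f (k+i)) = (e+1) * (2*n*p^e*(n*Sg p (Suc k)))" using fb by simp
  moreover have "(\<Sum>i<e. g (k+i)) = e * (2*n*p^e*(n*Sg p (Suc k)))" using gb by simp
  moreover have "p^M = p^e * p^(k+1)" unfolding M_def by (simp add: power_add[symmetric])
  ultimately show ?thesis unfolding D fs gs by (simp add: algebra_simps)
qed

lemma X_eq: "X k + p * Sg p k = k * p^(k+1)"
proof -
  have a: "p^(k-j) * (2*n*Sg p (Suc j)) + p^(k-j) = p^(k+1)" if "j < k" for j
  proof -
    have "p^(k-j) * (2*n*Sg p (Suc j)) + p^(k-j) = p^(k-j) * (2*n*Sg p (Suc j) + 1)" by (simp add: algebra_simps)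
    also have "\<dots> = p^(k-j) * p^(Suc j)" using Sg_pow by simp
    also have "\<dots> = p^(k+1)" using that by (simp add: power_add[symmetric])
    finally show ?thesis .
  qed
  have b: "(\<Sum>j<k. p^(k-j)) = p * Sg p k"
  proof -
    have "(\<Sum>j<k. p^(k-j)) = (\<Sum>j<k. p * p^(k - Suc j))" by (intro sum.cong) (auto simp: power_Suc[symmetric] Suc_diff_Suc)
    also have "\<dots> = p * (\<Sum>j<k. p^(k - Suc j))" by (simp add: sum_distrib_left)
    also have "(\<Sum>j<k. p^(k - Suc j)) = Sg p k" unfolding Sg_def by (rule sum.nat_diff_reindex)
    finally show ?thesis .
  qed
  have "X k + p * Sg p k = (\<Sum>j<k. p^(k-j) * (2*n*Sg p (Suc j)) + p^(k-j))" unfolding X_def b[symmetric] by (simp add: sum.distrib)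
  also have "\<dots> = (\<Sum>j<k. p^(k+1))" using a by (intro sum.cong) auto
  finally show ?thesis by simp
qed

lemma D_real:
  assumes "1 \<le> k" "l < p^k" "k + 2 < s"
  shows "real (fibM p k (Vv s l)) = real p ^ (s - 2 - k) * (real p - 1) / 2 *
     (2 * (real s - 1) * real p ^ (k + 1) - 2 * (real s - real k) + 3 - 2 * real p * real (Sg p k) + 2 * real (W k l))"
proof -
  define e where "e = s - 2 - k"
  have s: "s = e + k + 2" unfolding e_def using assms(3) by simp
  have Xr: "real (X k) = real k * real p^(k+1) - real p * real (Sg p k)" using arg_cong[OF X_eq[of k], of real] by simp
  have Sn: "2*n*Sg p (Suc k) = p^(k+1) - 1" using Sg_pow[of "Suc k"] by simp
  have p1: "1 \<le> p^(k+1)" using p_pos by simp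
  have pr: "real p - 1 = 2 * real n" using p_def by simp
  have "fibM p k (Vv s l) = n * p^e * (p^(k+1) + 2 * X k + 2 * W k l + (2*e+1) * (p^(k+1) - 1))"
    unfolding s D_final[OF assms(1,2)] Sn ..
  moreover have r1: "real (p^(k+1) - 1) = real p^(k+1) - 1" using p1 by (simp add: of_nat_diff)
  ultimately have "real (fibM p k (Vv s l)) = real n * real p^e * (real p^(k+1) + 2 * real (X k) + 2 * real (W k l) + (2*real e+1) * (real p^(k+1) - 1))"
    by (simp only: of_nat_mult of_nat_add of_nat_power r1 of_nat_numeral of_nat_1)
  also have "\<dots> = real p ^ (s - 2 - k) * (real p - 1) / 2 *
     (2 * (real s - 1) * real p ^ (k + 1) - 2 * (real s - real k) + 3 - 2 * real p * real (Sg p k) + 2 * real (W k l))"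
    unfolding pr e_def[symmetric] s Xr by (simp add: algebra_simps)
  finally show ?thesis .
qed

end

lemma sum_range_pow:
  assumes "a < k"
  shows "(\<Sum>\<iota>=a..k-1. (p::nat)^\<iota>) = p^a * Sg p (k-a)"
proof -
  have "(\<Sum>\<iota>=a..k-1. p^\<iota>) = (\<Sum>i=0..k-1-a. p^(a+i))"
    by (subst sum.atLeastAtMost_shift_0) (use assms in \<open>auto simp: comp_def\<close>)
  also have "\<dots> = (\<Sum>i<k-a. p^a * p^i)"
    using assms by (intro sum.cong) (auto simp: power_add atLeast0AtMost lessThan_Suc_atMost[symmetric])
  finally show ?thesis unfolding Sg_def by (simp add: sum_distrib_left)
qed

lemma sum_range_pow_real:
  assumes "a \<le> k"
  shows "(\<Sum>\<iota>=a..k. real p^\<iota>) = real (p^a * Sg p (Suc k - a))"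
proof -
  have "(\<Sum>\<iota>=a..k. real p^\<iota>) = (\<Sum>i=0..k-a. real p^(a+i))"
    by (subst sum.atLeastAtMost_shift_0) (use assms in \<open>auto simp: comp_def\<close>)
  also have "\<dots> = (\<Sum>i<Suc k-a. real p^a * real p^i)"
    using assms by (intro sum.cong) (auto simp: power_add atLeast0AtMost lessThan_Suc_atMost[symmetric] Suc_diff_le)
  finally show ?thesis unfolding Sg_def by (simp add: sum_distrib_left)
qed

context oddp begin

definition wj :: "nat \<Rightarrow> nat \<Rightarrow> nat \<Rightarrow> nat" where
  "wj k j l = p * ind k j l + cntm (k-j) (l div p^j)"

lemma W_wj: "W k l = (\<Sum>j<k. p^(k-1-j) * wj k j l)" unfolding W_def wj_def ..

lemma sum_rev_pow: "(\<Sum>j<N. p^(N - Suc j)) = Sg p N"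
  unfolding Sg_def using sum.nat_diff_reindex[of "\<lambda>i. p^i" N] by simp
lemma sum_rev_pow': "(\<Sum>j<N. p^(N-1-j)) = Sg p N"
  using sum_rev_pow by simp

lemma W_split:
  assumes "J \<le> k" "\<And>j. j < J \<Longrightarrow> wj k j l = \<alpha>" "\<And>j. J \<le> j \<Longrightarrow> j < k \<Longrightarrow> wj k j l = \<beta>"
  shows "W k l = \<alpha> * (p^(k-J) * Sg p J) + \<beta> * Sg p (k-J)"
proof -
  have kJ: "k = J + (k - J)" using assms(1) by simp
  have "W k l = (\<Sum>j<J. p^(k-1-j) * wj k j l) + (\<Sum>i<k-J. p^(k-1-(J+i)) * wj k (J+i) l)"
    unfolding W_wj by (subst kJ, subst sum_split_add) simp
  also have "(\<Sum>j<J. p^(k-1-j) * wj k j l) = (\<Sum>j<J. \<alpha> * (p^(k-J) * p^(J-1-j)))"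
  proof (intro sum.cong refl)
    fix j assume j: "j \<in> {..<J}"
    then have e: "k-1-j = (k-J) + (J-1-j)" using assms(1) by auto
    have "p^(k-1-j) = p^(k-J) * p^(J-1-j)" by (subst e) (rule power_add)
    then show "p^(k-1-j) * wj k j l = \<alpha> * (p^(k-J) * p^(J-1-j))" using assms(2) j by simp
  qed
  also have "\<dots> = \<alpha> * (p^(k-J) * Sg p J)" by (simp add: sum_distrib_left[symmetric] sum_rev_pow sum_rev_pow')
  also have "(\<Sum>i<k-J. p^(k-1-(J+i)) * wj k (J+i) l) = (\<Sum>i<k-J. \<beta> * p^(k-J-1-i))"
    using assms(3) by (intro sum.cong refl) (auto simp: algebra_simps)
  also have "\<dots> = \<beta> * Sg p (k-J)" unfolding sum_distrib_left[symmetric] sum_rev_pow' ..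
  finally show ?thesis .
qed

lemma r_bounds:
  assumes "lo \<le> l" "l \<le> hi" "lo = p^j*L + R1" "R1 < p^j" "hi = p^j*H + R2" "R2 < p^j"
  shows "L \<le> l div p^j" "l div p^j \<le> H"
proof -
  have "lo div p^j = L" unfolding assms(3) using assms(4) p_pos by simp
  then show "L \<le> l div p^j" using div_le_mono[OF assms(1), of "p^j"] by simp
  have "hi div p^j = H" unfolding assms(5) using assms(6) p_pos by simp
  then show "l div p^j \<le> H" using div_le_mono[OF assms(2), of "p^j"] by simp
qed

lemma cnt_val:
  assumes "1 \<le> m" "t \<le> p" "t = 0 \<or> (t-1) * Sg p m < r" "r \<le> t * Sg p m"
  shows "cntm m r = t"
proof -
  have S1: "1 \<le> Sg p m" using Sg_pos[OF assms(1)] .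
  have "{u. u < p \<and> u * Sg p m < r} = {..<t}"
  proof (rule set_eqI, rule iffI)
    fix u assume "u \<in> {u. u < p \<and> u * Sg p m < r}"
    then have u: "u * Sg p m < r" by simp
    show "u \<in> {..<t}"
    proof (rule ccontr)
      assume "u \<notin> {..<t}"
      then have "t * Sg p m \<le> u * Sg p m" by simp
      then show False using u assms(4) by linarith
    qed
  next
    fix u assume "u \<in> {..<t}"
    then have u: "u < t" by simp
    then have "t \<noteq> 0" by simp
    then have r: "(t-1) * Sg p m < r" using assms(3) by simp
    have "u \<le> t-1" using u by simp
    then have "u * Sg p m \<le> (t-1) * Sg p m" by (rule mult_le_mono1)
    then have "u * Sg p m < r" using r by linarith
    then show "u \<in> {u. u < p \<and> u * Sg p m < r}" using u r assms(2) by simp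
  qed
  then show ?thesis unfolding cntm_def by simp
qed

lemma ind_eq: "j \<le> k \<Longrightarrow> ind k j l = (if l div p^j < n * Sg p (k-j) then 1 else 0)"
  unfolding ind_def using Sg_pow[of "k-j"] by simp

end

context oddp begin

lemma Sg_lt: "a \<le> 2*n \<Longrightarrow> a * Sg p e < p^e"
proof -
  assume "a \<le> 2*n"
  then have "a * Sg p e \<le> 2*n*Sg p e" by (intro mult_le_mono1)
  then show ?thesis using Sg_pow[of e] by linarith
qed

lemma split_pow: "j \<le> i \<Longrightarrow> p^i = p^j * p^(i-j)"
  by (simp add: power_add[symmetric])

lemma W_a: "1 \<le> k \<Longrightarrow> W k 0 = p * Sg p k"
proof -
  assume k: "1 \<le> k"
  have "wj k j 0 = p" if "j < k" for j
  proof -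
    have "cntm (k-j) 0 = 0" by (rule cnt_val) (use that in auto)
    moreover have "1 \<le> Sg p (k-j)" using Sg_pos[of "k-j"] that by simp
    then have "ind k j 0 = 1" using ind_eq[of j k 0] that n_pos by simp
    ultimately show ?thesis unfolding wj_def by simp
  qed
  then have "W k 0 = p * (p^(k-k) * Sg p k) + p * Sg p (k-k)" by (intro W_split) auto
  then show ?thesis by simp
qed

lemma W_e: "1 \<le> k \<Longrightarrow> W k (n * Sg p k) = n * Sg p k"
proof -
  assume k: "1 \<le> k"
  have "wj k j (n * Sg p k) = n" if j: "j < k" for j
  proof -
    have m: "1 \<le> k - j" using j by simp
    have e: "n * Sg p k = p^j * (n * Sg p (k-j)) + n * Sg p j"
      using Sg_add[of p "k-j" j] j by (simp add: algebra_simps)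
    have r: "n * Sg p k div p^j = n * Sg p (k-j)" unfolding e using Sg_less[of j] p_pos by simp
    have "cntm (k-j) (n * Sg p k div p^j) = n" unfolding r
      by (rule cnt_val[OF m]) (use p_def Sg_pos[OF m] in auto)
    moreover have "ind k j (n * Sg p k) = 0" using ind_eq[of j k] j r by simp
    ultimately show ?thesis unfolding wj_def by simp
  qed
  then have "W k (n * Sg p k) = n * (p^(k-k) * Sg p k) + n * Sg p (k-k)" by (intro W_split) auto
  then show ?thesis by simp
qed

lemma W_c:
  assumes "1 \<le> k" "1 \<le> t" "t < p" "t \<noteq> n" "t * p^(k-1) \<le> l" "l \<le> t * Sg p k"
  shows "W k l = (if t < n then p + t else t) * Sg p k"
proof -
  have t2: "t \<le> 2*n" using assms(3) p_def by simp
  have "wj k j l = (if t < n then p + t else t)" if j: "j < k" for j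
  proof -
    define m where "m = k - j"
    have m: "1 \<le> m" "k = j + m" unfolding m_def using j by auto
    define m' where "m' = m - 1"
    have m': "m = Suc m'" unfolding m'_def using m by simp
    have lo: "t * p^(k-1) = p^j * (t * p^m') + 0" unfolding m(2) m' by (simp add: power_add)
    have hi: "t * Sg p k = p^j * (t * Sg p m) + t * Sg p j" unfolding m(2) using Sg_add[of p m j]
      by (simp add: algebra_simps)
    have R2: "t * Sg p j < p^j" using Sg_lt[OF t2] .
    have rb: "t * p^m' \<le> l div p^j" "l div p^j \<le> t * Sg p m"
      using r_bounds[OF assms(5,6) lo _ hi R2] p_pos by auto
    have Sm: "Sg p m = Sg p m' + p^m'" unfolding m' Sg_Suc' ..
    have c1: "(t-1) * Sg p m' < p^m'" using Sg_lt[of "t-1" m'] t2 by simp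
    have "(t-1) * Sg p m = (t-1) * Sg p m' + (t-1) * p^m'" unfolding Sm by (simp add: algebra_simps)
    moreover have "t * p^m' = (t-1) * p^m' + p^m'" using assms(2) by (simp add: algebra_simps)
    ultimately have "(t-1) * Sg p m < t * p^m'" using c1 by linarith
    then have cnt: "cntm m (l div p^j) = t" using rb by (intro cnt_val[OF m(1)]) (use assms(3) in auto)
    have ind: "ind k j l = (if t < n then 1 else 0)"
    proof (cases "t < n")
      case True
      have "t * Sg p m < n * Sg p m" using True Sg_pos[OF m(1)] by simp
      then have "l div p^j < n * Sg p m" using rb(2) by linarith
      then show ?thesis using ind_eq[of j k l] j True unfolding m_def by simp
    next
      case False
      then have tn: "n + 1 \<le> t" using assms(4) by simp
      have "n * Sg p m = n * Sg p m' + n * p^m'" unfolding Sm by (simp add: algebra_simps)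
      moreover have "n * Sg p m' < p^m'" using Sg_less .
      moreover have "(n+1) * p^m' \<le> t * p^m'" using tn by (rule mult_le_mono1)
      ultimately have "n * Sg p m \<le> l div p^j" using rb(1) by (simp add: algebra_simps)
      then show ?thesis using ind_eq[of j k l] j False unfolding m_def by simp
    qed
    show ?thesis unfolding wj_def ind m_def[symmetric] cnt by simp
  qed
  then have "W k l = (if t < n then p + t else t) * (p^(k-k) * Sg p k) + (if t < n then p + t else t) * Sg p (k-k)"
    by (intro W_split) auto
  then show ?thesis by simp
qed


lemma r_lower: "p^j * L \<le> l \<Longrightarrow> L \<le> l div p^j"
  using p_pos by (simp add: less_eq_div_iff_mult_less_eq mult.commute)

lemma r_upper: "l < p^j * (H+1) \<Longrightarrow> l div p^j \<le> H"
  using p_pos by (simp add: div_less_iff_less_mult less_Suc_eq_le[symmetric] mult.commute)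

lemma W_b:
  assumes "i + 2 \<le> k" "t = Suc c0" "t < p"
    "c0 * (p^i * Sg p (k-i)) + p^i \<le> l" "l < c0 * (p^(i+1) * Sg p (k-i-1)) + p^(i+1)"
  shows "W k l + Sg p (k-i-1) = (if t \<le> n then p + t else t) * Sg p k"
proof -
  define c where "c = (if t \<le> n then p else 0)"
  have c02: "c0 \<le> 2*n" "t \<le> 2*n" using assms(2,3) p_def by auto
  define K where "K = k - i"
  have K: "2 \<le> K" "k - i - 1 = K - 1" "K = Suc (K-1)" unfolding K_def using assms(1) by auto
  have lo_l: "c0 * (p^i * Sg p K) + p^i \<le> l" using assms(4) unfolding K_def .
  have hi_l: "l < c0 * (p^(i+1) * Sg p (K-1)) + p^(i+1)" using assms(5) unfolding K(2) .
  have SK1: "1 \<le> Sg p (K-1)" using Sg_pos[of "K-1"] K(1) by simp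
  have w1: "wj k j l = c + t" if j: "j \<le> i" for j
  proof -
    define e where "e = i - j"
    define m where "m = k - j"
    have me: "m = K + e" "m = (K-1) + Suc e" "1 \<le> m" unfolding m_def e_def K_def using j assms(1) by auto
    have pi: "p^i = p^j * p^e" unfolding e_def using split_pow[OF j] .
    have pi1: "p^(i+1) = p^j * p^(Suc e)" unfolding e_def using split_pow[of j "i+1"] j by (simp add: Suc_diff_le)
    define L where "L = c0 * (p^e * Sg p K) + p^e"
    define Z where "Z = c0 * (p^(Suc e) * Sg p (K-1)) + p^(Suc e)"
    have Z1: "1 \<le> Z"
    proof -
      have "1 \<le> p^(Suc e)" using p_pos by simp
      then show ?thesis unfolding Z_def by linarith
    qed
    have "p^j * L \<le> l" using lo_l unfolding L_def pi by (simp add: algebra_simps)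
    then have rl: "L \<le> l div p^j" by (rule r_lower)
    have "l < p^j * ((Z - 1) + 1)" using hi_l Z1 unfolding Z_def pi1 by (simp add: algebra_simps)
    then have ru: "l div p^j \<le> Z - 1" by (rule r_upper)
    have Sm1: "Sg p m = Sg p K * p^e + Sg p e" unfolding me(1) Sg_add ..
    have Sm2: "Sg p m = Sg p (K-1) * p^(Suc e) + Sg p (Suc e)" unfolding me(2) Sg_add ..
    have a1: "c0 * Sg p e < p^e" using Sg_lt[OF c02(1)] .
    have cL: "c0 * Sg p m < L" unfolding Sm1 L_def using a1 by (simp add: algebra_simps)
    have tZ: "Z \<le> t * (Sg p (K-1) * p^(Suc e))"
    proof -
      have "p^(Suc e) \<le> Sg p (K-1) * p^(Suc e)" using SK1 by simp
      then show ?thesis unfolding Z_def assms(2) by (simp add: algebra_simps)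
    qed
    have "t * (Sg p (K-1) * p^(Suc e)) \<le> t * Sg p m" unfolding Sm2 by (simp add: algebra_simps)
    then have Zt: "Z - 1 \<le> t * Sg p m" using tZ by linarith
    have cnt: "cntm m (l div p^j) = t"
      by (rule cnt_val[OF me(3)]) (use assms(2,3) cL rl ru Zt in auto)
    have ind: "ind k j l = (if t \<le> n then 1 else 0)"
    proof (cases "t \<le> n")
      case True
      have "t * (Sg p (K-1) * p^(Suc e)) \<le> n * (Sg p (K-1) * p^(Suc e))" using True by (rule mult_le_mono1)
      moreover have "n * (Sg p (K-1) * p^(Suc e)) \<le> n * Sg p m" unfolding Sm2 by (simp add: algebra_simps)
      ultimately have "l div p^j < n * Sg p m" using tZ Z1 ru by linarith
      then show ?thesis using ind_eq[of j k l] j assms(1) True unfolding m_def by simp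
    next
      case False
      then have "n \<le> c0" using assms(2) by simp
      then have "n * (p^e * Sg p K) \<le> c0 * (p^e * Sg p K)" by (rule mult_le_mono1)
      moreover have "n * Sg p e < p^e" using Sg_less .
      moreover have "n * Sg p m = n * (p^e * Sg p K) + n * Sg p e" unfolding Sm1 by (simp add: algebra_simps)
      ultimately have "n * Sg p m \<le> l div p^j" using rl unfolding L_def by linarith
      then show ?thesis using ind_eq[of j k l] j assms(1) False unfolding m_def by simp
    qed
    show ?thesis unfolding wj_def ind m_def[symmetric] cnt c_def by simp
  qed
  have w2: "wj k j l = c + c0" if j: "i + 1 \<le> j" "j < k" for j
  proof -
    define e where "e = j - (i+1)"
    define m where "m = k - j"
    have me: "K - 1 = m + e" "1 \<le> m" unfolding m_def e_def K_def using j by auto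
    have pj: "p^j = p^(i+1) * p^e" unfolding e_def using split_pow[of "i+1" j] j by simp
    have SK: "Sg p K = p * (Sg p m * p^e + Sg p e) + 1" by (subst K(3), subst Sg_Suc, subst me(1), subst Sg_add) simp
    have a1: "c0 * Sg p e + 1 \<le> p^e" using Sg_lt[OF c02(1), of e] by simp
    have "p^(i+1) * (c0 * Sg p e + 1) \<le> p^(i+1) * p^e" using a1 by (rule mult_le_mono2)
    then have R: "c0 * (p^(i+1) * Sg p e) + p^(i+1) \<le> p^j" unfolding pj by (simp add: algebra_simps)
    have "p^j * (c0 * Sg p m) \<le> c0 * (p^i * Sg p K) + p^i" unfolding SK pj by (simp add: algebra_simps)
    then have rl: "c0 * Sg p m \<le> l div p^j" using lo_l by (intro r_lower) linarith
    have SK1e: "Sg p (K-1) = Sg p m * p^e + Sg p e" unfolding me(1) Sg_add ..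
    have "c0 * (p^(i+1) * Sg p (K-1)) + p^(i+1) \<le> p^j * (c0 * Sg p m + 1)"
      using R unfolding SK1e pj by (simp add: algebra_simps)
    then have ru: "l div p^j \<le> c0 * Sg p m" using hi_l by (intro r_upper) linarith
    have r: "l div p^j = c0 * Sg p m" using rl ru by simp
    have Sm: "1 \<le> Sg p m" using Sg_pos[OF me(2)] .
    have cnt: "cntm m (l div p^j) = c0" unfolding r
      by (rule cnt_val[OF me(2)]) (use assms(2,3) Sm in auto)
    have ind: "ind k j l = (if t \<le> n then 1 else 0)"
      using ind_eq[of j k l] j r Sm assms(2) unfolding m_def by auto
    show ?thesis unfolding wj_def ind m_def[symmetric] cnt c_def by simp
  qed
  have W: "W k l = (c + t) * (p^(k-(i+1)) * Sg p (i+1)) + (c + c0) * Sg p (k-(i+1))"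
    using assms(1) w1 w2 by (intro W_split) auto
  have Sk: "Sg p k = Sg p (i+1) * p^(k-(i+1)) + Sg p (k-(i+1))"
    using Sg_add[of p "i+1" "k-(i+1)"] assms(1) by simp
  have ct: "(if t \<le> n then p + t else t) = c + t" unfolding c_def by simp
  show ?thesis unfolding W Sk ct using assms(2)
    by (simp add: algebra_simps)
qed


lemma r_upper': "l < p^j * Y \<Longrightarrow> l div p^j < Y"
  using p_pos by (simp add: div_less_iff_less_mult mult.commute)

lemma W_d:
  assumes "1 \<le> i'" "i' + 1 \<le> k" "n * (p^i' * Sg p (k-i')) \<le> l" "l < n * (p^(i'-1) * Sg p (k-i'+1))"
  shows "W k l = n * Sg p k + p * (p^(k-i') * Sg p i')"
proof -
  have w1: "wj k j l = p + n" if j: "j < i'" for j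
  proof -
    define e where "e = i' - j"
    define m where "m = k - j"
    have me: "m = (k-i') + e" "m = (k-i'+1) + (e-1)" "1 \<le> m" "1 \<le> e" unfolding m_def e_def using j assms(1,2) by auto
    have pi: "p^i' = p^j * p^e" unfolding e_def using split_pow[of j i'] j by simp
    have pi1: "p^(i'-1) = p^j * p^(e-1)" unfolding e_def using split_pow[of j "i'-1"] j by (simp add: diff_diff_left)
    have "p^j * (n * (p^e * Sg p (k-i'))) \<le> l" using assms(3) unfolding pi by (simp add: algebra_simps)
    then have rl: "n * (p^e * Sg p (k-i')) \<le> l div p^j" by (rule r_lower)
    have "l < p^j * (n * (p^(e-1) * Sg p (k-i'+1)))" using assms(4) unfolding pi1 by (simp add: algebra_simps)
    then have ru: "l div p^j < n * (p^(e-1) * Sg p (k-i'+1))" by (rule r_upper')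
    have Sm1: "Sg p m = Sg p (k-i') * p^e + Sg p e" unfolding me(1) Sg_add ..
    have Sm2: "Sg p m = Sg p (k-i'+1) * p^(e-1) + Sg p (e-1)" unfolding me(2) Sg_add ..
    have S1: "1 \<le> Sg p (k-i')" using Sg_pos[of "k-i'"] assms(2) by simp
    have a1: "(n-1) * Sg p e < p^e" using Sg_lt[of "n-1" e] by simp
    have "p^e \<le> p^e * Sg p (k-i')" using S1 by simp
    moreover have "(n-1) * Sg p m = (n-1) * (p^e * Sg p (k-i')) + (n-1) * Sg p e" unfolding Sm1
      by (simp add: algebra_simps)
    moreover have "n * (p^e * Sg p (k-i')) = (n-1) * (p^e * Sg p (k-i')) + p^e * Sg p (k-i')"
      using n_pos by (cases n) (auto simp: algebra_simps)
    ultimately have "(n-1) * Sg p m < n * (p^e * Sg p (k-i'))" using a1 by linarith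
    then have c1: "(n-1) * Sg p m < l div p^j" using rl by linarith
    have "n * (p^(e-1) * Sg p (k-i'+1)) \<le> n * Sg p m" unfolding Sm2 by (simp add: algebra_simps)
    then have c2: "l div p^j < n * Sg p m" using ru by linarith
    have cnt: "cntm m (l div p^j) = n"
      by (rule cnt_val[OF me(3)]) (use c1 c2 p_def in auto)
    have ind: "ind k j l = 1" using ind_eq[of j k l] j assms(2) c2 unfolding m_def by simp
    show ?thesis unfolding wj_def ind m_def[symmetric] cnt by simp
  qed
  have w2: "wj k j l = n" if j: "i' \<le> j" "j < k" for j
  proof -
    define e where "e = j - i'"
    define m where "m = k - j"
    have me: "k - i' = m + e" "k - i' + 1 = m + Suc e" "1 \<le> m" unfolding m_def e_def using j by auto
    have pj: "p^j = p^i' * p^e" unfolding e_def using split_pow[of i' j] j by simp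
    have ee: "j - (i'-1) = Suc e" unfolding e_def using j assms(1) by simp
    have pj1: "p^j = p^(i'-1) * p^(Suc e)" using split_pow[of "i'-1" j, unfolded ee] j by simp
    have "p^j * (n * Sg p m) \<le> n * (p^i' * Sg p (k-i'))" unfolding me(1) Sg_add pj by (simp add: algebra_simps)
    then have rl: "n * Sg p m \<le> l div p^j" using assms(3) by (intro r_lower) linarith
    have a1: "n * Sg p (Suc e) < p^(Suc e)" using Sg_less .
    have "p^(i'-1) * (n * Sg p (Suc e)) \<le> p^(i'-1) * p^(Suc e)" using a1 by simp
    then have "n * (p^(i'-1) * Sg p (k-i'+1)) \<le> p^j * (n * Sg p m + 1)" unfolding me(2) Sg_add pj1
      by (simp add: algebra_simps)
    then have ru: "l div p^j \<le> n * Sg p m" using assms(4) by (intro r_upper) linarith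
    have r: "l div p^j = n * Sg p m" using rl ru by simp
    have Sm: "1 \<le> Sg p m" using Sg_pos[OF me(3)] .
    have cnt: "cntm m (l div p^j) = n" unfolding r
      by (rule cnt_val[OF me(3)]) (use Sm p_def n_pos in auto)
    have ind: "ind k j l = 0" using ind_eq[of j k l] j r unfolding m_def by simp
    show ?thesis unfolding wj_def ind m_def[symmetric] cnt by simp
  qed
  have W: "W k l = (p + n) * (p^(k-i') * Sg p i') + n * Sg p (k-i')"
    using assms(2) w1 w2 by (intro W_split) auto
  have Sk: "Sg p k = Sg p i' * p^(k-i') + Sg p (k-i')"
    using Sg_add[of p i' "k-i'"] assms(2) by simp
  show ?thesis unfolding W Sk by (simp add: algebra_simps)
qed

end

theorem mainTheorem8:
  fixes p k s l :: nat
  assumes "prime p" and "odd p" and "2 \<le> k" and "k + 2 < s" and "l < p ^ k"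
  defines "S \<equiv> (\<Sum>j<k. p ^ j)"
    and "A \<equiv> 2 * (real s - 1) * real p ^ (k + 1) - 2 * (real s - real k) + 3"
    and "c \<equiv> real p ^ (s - 2 - k) * (real p - 1) / 2"
    and "M \<equiv> real (fibM p k (Vv s l))"
  shows
    "(l = 0 \<longrightarrow> M = c * A)
   \<and> (\<forall>i t. i \<le> k - 2 \<and> 1 \<le> t \<and> t \<le> p - 1
        \<and> (t - 1) * (\<Sum>\<iota>=i..k-1. p ^ \<iota>) + p ^ i \<le> l
        \<and> l \<le> (t - 1) * (\<Sum>\<iota>=i+1..k-1. p ^ \<iota>) + p ^ (i + 1) - 1 \<longrightarrow>
        (2 * t \<le> p - 1 \<longrightarrow>
           M = c * (A + 2 * real t * real S - 2 * (\<Sum>\<mu>=0..k-i-2. real p ^ \<mu>)))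
      \<and> (p + 1 \<le> 2 * t \<longrightarrow>
           M = c * (A + (2 * real t - 2 * real p) * real S - 2 * (\<Sum>\<mu>=0..k-i-2. real p ^ \<mu>))))
   \<and> (\<forall>t. 1 \<le> t \<and> t \<le> p - 1 \<and> 2 * t \<noteq> p - 1
        \<and> t * p ^ (k - 1) \<le> l \<and> l \<le> t * S \<longrightarrow>
        (2 * t \<le> p - 3 \<longrightarrow> M = c * (A + 2 * real t * real S))
      \<and> (p + 1 \<le> 2 * t \<longrightarrow> M = c * (A + (2 * real t - 2 * real p) * real S)))
   \<and> (\<forall>i'. 1 \<le> i' \<and> i' \<le> k - 1
        \<and> (p - 1) div 2 * (\<Sum>\<iota>=i'..k-1. p ^ \<iota>) \<le> l
        \<and> l \<le> (p - 1) div 2 * (\<Sum>\<iota>=i'-1..k-1. p ^ \<iota>) - 1 \<longrightarrow>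
        M = c * (A - real p ^ k - 2 * (\<Sum>\<theta>=1..k-1. real p ^ \<theta>)
                 + 2 * (\<Sum>\<mu>=k-i'+1..k. real p ^ \<mu>) - 1))
   \<and> (l = (p - 1) div 2 * S \<longrightarrow>
        M = c * (A - real p ^ k - 2 * (\<Sum>\<theta>=1..k-1. real p ^ \<theta>) - 1))"
proof -
  define n where "n = (p - 1) div 2"
  have p2: "2 \<le> p" using assms(1) prime_ge_2_nat by blast
  have pn: "p = 2*n+1" using assms(2) p2 unfolding n_def by presburger
  have n1: "1 \<le> n" using assms(2) p2 unfolding n_def by presburger
  interpret O: oddp p n by unfold_locales (fact pn, fact n1)
  have k1: "1 \<le> k" using assms(3) by simp
  have S: "S = Sg p k" unfolding S_def Sg_def ..
  have Md: "M = c * (A - 2 * real p * real S + 2 * real (O.W k l))"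
    unfolding M_def c_def A_def S using O.D_real[OF k1 assms(5,4)] by simp
  have ndiv: "(p - 1) div 2 = n" unfolding n_def ..
  have pr: "real p = 2 * real n + 1" using pn by simp
  have R1: "2 * real n * real S = real p ^ k - 1"
    using arg_cong[OF O.Sg_pow[of k], of real] unfolding S by simp
  have Sk: "Sg p k = Sg p (k-1) + p^(k-1)" using Sg_Suc'[of p "k-1"] k1 by simp
  have pk: "p^k = p * p^(k-1)" using k1 by (simp add: power_Suc[symmetric])
  have pkr: "real p * real p ^ (k-1) = real p ^ k" using k1 by (cases k) auto
  have pS: "real p * real S = real p * real (Sg p (k-1)) + real p ^ k"
    unfolding S Sk pkr[symmetric] by (simp add: algebra_simps)
  have th1: "(\<Sum>\<theta>=1..k-1. real p ^ \<theta>) = real p * real (Sg p (k-1))"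
    using sum_range_pow_real[of 1 "k-1" p] assms(3) by simp
  have a: "l = 0 \<longrightarrow> M = c * A"
  proof
    assume "l = 0"
    then show "M = c * A" unfolding Md using O.W_a[OF k1] S by simp
  qed
  have b: "\<forall>i t. i \<le> k - 2 \<and> 1 \<le> t \<and> t \<le> p - 1
        \<and> (t - 1) * (\<Sum>\<iota>=i..k-1. p ^ \<iota>) + p ^ i \<le> l
        \<and> l \<le> (t - 1) * (\<Sum>\<iota>=i+1..k-1. p ^ \<iota>) + p ^ (i + 1) - 1 \<longrightarrow>
        (2 * t \<le> p - 1 \<longrightarrow>
           M = c * (A + 2 * real t * real S - 2 * (\<Sum>\<mu>=0..k-i-2. real p ^ \<mu>)))
      \<and> (p + 1 \<le> 2 * t \<longrightarrow>
           M = c * (A + (2 * real t - 2 * real p) * real S - 2 * (\<Sum>\<mu>=0..k-i-2. real p ^ \<mu>)))"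
  proof (intro allI impI)
    fix i t
    assume H: "i \<le> k - 2 \<and> 1 \<le> t \<and> t \<le> p - 1
        \<and> (t - 1) * (\<Sum>\<iota>=i..k-1. p ^ \<iota>) + p ^ i \<le> l
        \<and> l \<le> (t - 1) * (\<Sum>\<iota>=i+1..k-1. p ^ \<iota>) + p ^ (i + 1) - 1"
    have "i \<le> k - 2" using H by blast
    then have ik: "i + 2 \<le> k" using assms(3) by linarith
    have t1: "1 \<le> t" "t \<le> p-1" using H by blast+
    have ts: "t = Suc (t-1)" "t < p" using t1 p2 by linarith+
    have lo: "(t-1) * (p^i * Sg p (k-i)) + p^i \<le> l" using H sum_range_pow[of i k p] ik by simp
    have eqs: "(\<Sum>\<iota>=i+1..k-1. p ^ \<iota>) = p^(i+1) * Sg p (k-i-1)" using sum_range_pow[of "i+1" k p] ik by simp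
    have pos: "0 < p^(i+1)" using p2 by simp
    have up: "l \<le> (t - 1) * (\<Sum>\<iota>=i+1..k-1. p ^ \<iota>) + p ^ (i + 1) - 1" using H by blast
    have hi: "l < (t-1) * (p^(i+1) * Sg p (k-i-1)) + p^(i+1)" using up pos unfolding eqs by linarith
    have Wb: "O.W k l + Sg p (k-i-1) = (if t \<le> n then p + t else t) * Sg p k"
      by (rule O.W_b[OF ik ts(1) ts(2) lo hi])
    have mu: "(\<Sum>\<mu>=0..k-i-2. real p ^ \<mu>) = real (Sg p (k-i-1))"
      using sum_range_pow_real[of 0 "k-i-2" p] ik by (simp add: Suc_diff_Suc numeral_2_eq_2)
    show "(2 * t \<le> p - 1 \<longrightarrow>
           M = c * (A + 2 * real t * real S - 2 * (\<Sum>\<mu>=0..k-i-2. real p ^ \<mu>)))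
      \<and> (p + 1 \<le> 2 * t \<longrightarrow>
           M = c * (A + (2 * real t - 2 * real p) * real S - 2 * (\<Sum>\<mu>=0..k-i-2. real p ^ \<mu>)))"
    proof (intro conjI impI)
      assume "2 * t \<le> p - 1"
      then have tn: "t \<le> n" using pn by simp
      have "real (O.W k l) + real (Sg p (k-i-1)) = (real p + real t) * real S"
        using arg_cong[OF Wb, of real] tn unfolding S by simp
      then have WR: "real (O.W k l) = (real p + real t) * real S - real (Sg p (k-i-1))" by linarith
      show "M = c * (A + 2 * real t * real S - 2 * (\<Sum>\<mu>=0..k-i-2. real p ^ \<mu>))"
        unfolding Md mu WR by (simp add: algebra_simps)
    next
      assume "p + 1 \<le> 2 * t"
      then have tn: "\<not> t \<le> n" using pn by simp
      have "real (O.W k l) + real (Sg p (k-i-1)) = real t * real S"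
        using arg_cong[OF Wb, of real] tn unfolding S by simp
      then have WR: "real (O.W k l) = real t * real S - real (Sg p (k-i-1))" by linarith
      show "M = c * (A + (2 * real t - 2 * real p) * real S - 2 * (\<Sum>\<mu>=0..k-i-2. real p ^ \<mu>))"
        unfolding Md mu WR by (simp add: algebra_simps)
    qed
  qed
  have cc: "\<forall>t. 1 \<le> t \<and> t \<le> p - 1 \<and> 2 * t \<noteq> p - 1
        \<and> t * p ^ (k - 1) \<le> l \<and> l \<le> t * S \<longrightarrow>
        (2 * t \<le> p - 3 \<longrightarrow> M = c * (A + 2 * real t * real S))
      \<and> (p + 1 \<le> 2 * t \<longrightarrow> M = c * (A + (2 * real t - 2 * real p) * real S))"
  proof (intro allI impI)
    fix t
    assume H: "1 \<le> t \<and> t \<le> p - 1 \<and> 2 * t \<noteq> p - 1 \<and> t * p ^ (k - 1) \<le> l \<and> l \<le> t * S"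
    have tn: "t \<noteq> n" "t < p" using H pn by auto
    have Wc: "O.W k l = (if t < n then p + t else t) * Sg p k"
      by (rule O.W_c[OF k1]) (use H tn S in auto)
    show "(2 * t \<le> p - 3 \<longrightarrow> M = c * (A + 2 * real t * real S))
      \<and> (p + 1 \<le> 2 * t \<longrightarrow> M = c * (A + (2 * real t - 2 * real p) * real S))"
    proof (intro conjI impI)
      assume a3: "2 * t \<le> p - 3"
      have t1: "1 \<le> t" using H by blast
      have "t < n" using pn t1 a3 by linarith
      then have "real (O.W k l) = (real p + real t) * real S" using Wc S by simp
      then show "M = c * (A + 2 * real t * real S)" unfolding Md by (simp add: algebra_simps)
    next
      assume "p + 1 \<le> 2 * t"
      then have "\<not> t < n" using pn by simp
      then have "real (O.W k l) = real t * real S" using Wc S by simp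
      then show "M = c * (A + (2 * real t - 2 * real p) * real S)" unfolding Md by (simp add: algebra_simps)
    qed
  qed
  have d: "\<forall>i'. 1 \<le> i' \<and> i' \<le> k - 1
        \<and> (p - 1) div 2 * (\<Sum>\<iota>=i'..k-1. p ^ \<iota>) \<le> l
        \<and> l \<le> (p - 1) div 2 * (\<Sum>\<iota>=i'-1..k-1. p ^ \<iota>) - 1 \<longrightarrow>
        M = c * (A - real p ^ k - 2 * (\<Sum>\<theta>=1..k-1. real p ^ \<theta>)
                 + 2 * (\<Sum>\<mu>=k-i'+1..k. real p ^ \<mu>) - 1)"
  proof (intro allI impI)
    fix i'
    assume H: "1 \<le> i' \<and> i' \<le> k - 1
        \<and> (p - 1) div 2 * (\<Sum>\<iota>=i'..k-1. p ^ \<iota>) \<le> l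
        \<and> l \<le> (p - 1) div 2 * (\<Sum>\<iota>=i'-1..k-1. p ^ \<iota>) - 1"
    have i1: "1 \<le> i'" "i' + 1 \<le> k" using H k1 by auto
    have lo: "n * (p^i' * Sg p (k-i')) \<le> l" using H sum_range_pow[of i' k p] i1 unfolding ndiv by simp
    have "(\<Sum>\<iota>=i'-1..k-1. p ^ \<iota>) = p^(i'-1) * Sg p (k-(i'-1))" using sum_range_pow[of "i'-1" k p] i1 by simp
    moreover have "k-(i'-1) = k-i'+1" using i1 by simp
    ultimately have eqs: "(\<Sum>\<iota>=i'-1..k-1. p ^ \<iota>) = p^(i'-1) * Sg p (k-i'+1)" by (simp only:)
    have "1 \<le> Sg p (k-i'+1)" using O.Sg_pos[of "k-i'+1"] by simp
    moreover have "1 \<le> p^(i'-1)" using p2 by simp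
    ultimately have "1 \<le> p^(i'-1) * Sg p (k-i'+1)" by (simp add: Suc_le_eq)
    then have pos: "1 \<le> n * (p^(i'-1) * Sg p (k-i'+1))" using n1 by (simp add: Suc_le_eq)
    have up: "l \<le> (p - 1) div 2 * (\<Sum>\<iota>=i'-1..k-1. p ^ \<iota>) - 1" using H by blast
    have hi: "l < n * (p^(i'-1) * Sg p (k-i'+1))" using up pos unfolding eqs ndiv by linarith
    have Wd: "O.W k l = n * Sg p k + p * (p^(k-i') * Sg p i')" by (rule O.W_d[OF i1 lo hi])
    have mu: "(\<Sum>\<mu>=k-i'+1..k. real p ^ \<mu>) = real (p^(k-i'+1) * Sg p i')"
      using sum_range_pow_real[of "k-i'+1" k p] i1 by simp
    have mu': "(\<Sum>\<mu>=k-i'+1..k. real p ^ \<mu>) = real p * (real p^(k-i') * real (Sg p i'))"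
      unfolding mu by simp
    have WR: "real (O.W k l) = real n * real S + real p * (real p^(k-i') * real (Sg p i'))"
      using Wd S by simp
    have f1: "real n * real S = (real p^k - 1) / 2" using R1 by (simp add: mult.assoc)
    have f2: "2 * real p * real S = 2 * (real p * real S)" by simp
    have inner: "A - 2 * real p * real S + 2 * real (O.W k l) = A - real p ^ k - 2 * (\<Sum>\<theta>=1..k-1. real p ^ \<theta>)
                 + 2 * (\<Sum>\<mu>=k-i'+1..k. real p ^ \<mu>) - 1"
      unfolding WR th1 f2 mu' f1 pS by (simp add: field_simps)
    show "M = c * (A - real p ^ k - 2 * (\<Sum>\<theta>=1..k-1. real p ^ \<theta>)
                 + 2 * (\<Sum>\<mu>=k-i'+1..k. real p ^ \<mu>) - 1)"
      unfolding Md inner ..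
  qed
  have e: "l = (p - 1) div 2 * S \<longrightarrow>
        M = c * (A - real p ^ k - 2 * (\<Sum>\<theta>=1..k-1. real p ^ \<theta>) - 1)"
  proof
    assume "l = (p - 1) div 2 * S"
    then have "l = n * Sg p k" unfolding ndiv S .
    then have WR: "real (O.W k l) = real n * real S" using O.W_e[OF k1] S by simp
    have f1: "real n * real S = (real p^k - 1) / 2" using R1 by (simp add: mult.assoc)
    have f2: "2 * real p * real S = 2 * (real p * real S)" by simp
    have inner: "A - 2 * real p * real S + 2 * real (O.W k l) = A - real p ^ k - 2 * (\<Sum>\<theta>=1..k-1. real p ^ \<theta>) - 1"
      unfolding WR th1 f2 f1 pS by (simp add: field_simps)
    show "M = c * (A - real p ^ k - 2 * (\<Sum>\<theta>=1..k-1. real p ^ \<theta>) - 1)"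
      unfolding Md inner ..
  qed
  show ?thesis using a b cc d e by blast
qed

end
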